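(* Let $A=(S^c)_{sa}$ with order unit $I$, and let $L(\phi)=\max_{i=1,2,3}\|\delta_i(\phi)\|_{\infty,\infty,1}$ for $\phi\in A$. Then $((A,I),L)$ is a compact quantum metric space. That is, $L$ is a seminorm on $A$ with the following properties: (i) $L(a)=0$ if and only if $a\in\mathbb R I$; (ii) the metric $\rho_L(\omega_1,\omega_2)=\sup\{|\omega_1(a)-\omega_2(a)|:L(a)\le1\}$ on the state space $S(A)$ induces the weak-$*$ topology.
   Context: Let $\mathbb T=\mathbb R/\mathbb Z$ and $e(t)=e^{2\pi it}$. Fix a positive integer $c$ and real numbers $\hbar,\mu,\nu$ with $\mu^2+\nu^2\ne0$. $S^c$ is the space of $C^\infty$ functions $\Phi:\mathbb R\times\mathbb T\times\mathbb Z\to\mathbb C$ satisfying two conditions: (a) $\Phi(x+k,y,p)=e(ckpy)\Phi(x,y,p)$ for all $k\in\mathbb Z$; (b) for every polynomial $P$ on $\mathbb Z$, every $m,n\ge0$ and every compact $K\subset\mathbb R\times\mathbb T$, the function $P(p)\,\partial_x^m\partial_y^n\Phi$ is bounded on $K\times\mathbb Z$. Product and involution on $S^c$: $$(\Phi\star\Psi)(x,y,p)=\sum_{q}\Phi(x-\hbar(q-p)\mu,\,y-\hbar(q-p)\nu,\,q)\,\Psi(x-\hbar q\mu,\,y-\hbar q\nu,\,p-q),$$ $$\Phi^*(x,y,p)=\overline{\Phi(x,y,-p)}.$$ These act faithfully on $L^2(\mathbb R\times\mathbb T\times\mathbb Z)$ via $$(\pi(\Phi)\xi)(x,y,p)=\sum_q\Phi(x-\hbar(q-2p)\mu,\,y-\hbar(q-2p)\nu,\,q)\,\xi(x,y,p-q).$$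 The norm closure of $\pi(S^c)$ is the quantum Heisenberg manifold. The C*-norm on $S^c$ is the operator norm, and $I=(x,y,p)\mapsto\delta_{p0}$ is the identity. An order unit space is a real partially ordered vector space with a distinguished element $e$ satisfying two properties: for every $a$ there is $r$ with $a\le re$; and if $a\le re$ for all $r\ge0$, then $a\le0$. $A=(S^c)_{sa}$ is an order unit space with the order inherited from the C*-algebra and the C*-norm. A state is a bounded linear functional $\omega$ with $\omega(I)=1=\|\omega\|$; $S(A)$ is the set of states. A compact quantum metric space is a pair consisting of an order unit space and a seminorm $L$ satisfying (i) and (ii) above (a Lip norm). The norm $\|\cdot\|_{\infty,\infty,1}$ is defined by $\|\phi\|_{\infty,\infty,1}=\sum_{p\in\mathbb Z}\sup_{x\in\mathbb R,y\in\mathbb T}|\phi(x,y,p)|$. The derivations are: $$\delta_1(\phi)=-\partial_x\phi,$$ $$\delta_2(\phi)(x,y,p)=2\pi icpx\,\phi(x,y,p)-\partial_y\phi(x,y,p),$$ $$\delta_3(\phi)(x,y,p)=2\pi ip\,\phi(x,y,p).$$ *)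

theory Defs
  imports "HOL-Analysis.Analysis" "HOL-Computational_Algebra.Polynomial"
begin

text \<open>Elements of S^c are functions Phi x y p with x real, y real (1-periodic, i.e. y in T),
p integer.\<close>
type_synonym qhf = "real \<Rightarrow> real \<Rightarrow> int \<Rightarrow> complex"

definition ee :: "real \<Rightarrow> complex" where
  "ee t = cis (2 * pi * t)"

definition smooth_xy :: "(real \<Rightarrow> real \<Rightarrow> complex) \<Rightarrow> bool" where
  "smooth_xy f \<longleftrightarrow> (\<exists>D::nat \<Rightarrow> nat \<Rightarrow> real \<Rightarrow> real \<Rightarrow> complex.
      D 0 0 = f \<and>
      (\<forall>m n x y. ((\<lambda>t. D m n t y) has_vector_derivative D (Suc m) n x y) (at x) \<and>
                 ((\<lambda>t. D m n x t) has_vector_derivative D m (Suc n) x y) (at y)) \<and>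
      (\<forall>m n. continuous_on UNIV (\<lambda>z. D m n (fst z) (snd z))))"

definition pdx :: "qhf \<Rightarrow> qhf" where
  "pdx \<Phi> = (\<lambda>x y p. vector_derivative (\<lambda>t. \<Phi> t y p) (at x))"

definition pdy :: "qhf \<Rightarrow> qhf" where
  "pdy \<Phi> = (\<lambda>x y p. vector_derivative (\<lambda>t. \<Phi> x t p) (at y))"

definition Sc :: "nat \<Rightarrow> qhf set" where
  "Sc c = {\<Phi>.
     (\<forall>p. smooth_xy (\<lambda>x y. \<Phi> x y p)) \<and>
     (\<forall>x y p. \<Phi> x (y + 1) p = \<Phi> x y p) \<and>
     (\<forall>k::int. \<forall>x y p. \<Phi> (x + of_int k) y p = ee (real c * of_int k * of_int p * y) * \<Phi> x y p) \<and>
     (\<forall>(P::real poly) m n (K::(real \<times> real) set). compact K \<longrightarrow>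
        (\<exists>B. \<forall>x y p. (x, y) \<in> K \<longrightarrow>
           norm (complex_of_real (poly P (of_int p)) * ((pdx ^^ m) ((pdy ^^ n) \<Phi>)) x y p) \<le> B))}"

definition qadd :: "qhf \<Rightarrow> qhf \<Rightarrow> qhf" where
  "qadd a b = (\<lambda>x y p. a x y p + b x y p)"

definition qscale :: "real \<Rightarrow> qhf \<Rightarrow> qhf" where
  "qscale r a = (\<lambda>x y p. complex_of_real r * a x y p)"

definition qstar :: "qhf \<Rightarrow> qhf" where
  "qstar \<Phi> = (\<lambda>x y p. cnj (\<Phi> x y (- p)))"

definition qI :: qhf where
  "qI = (\<lambda>x y p. if p = 0 then 1 else 0)"

definition Asa :: "nat \<Rightarrow> qhf set" where
  "Asa c = {\<Phi> \<in> Sc c. qstar \<Phi> = \<Phi>}"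

text \<open>L^2(R x T x Z): T represented by [0,1].\<close>
definition hmeas :: "((real \<times> real) \<times> int) measure" where
  "hmeas = (lborel \<Otimes>\<^sub>M restrict_space lborel {0..1}) \<Otimes>\<^sub>M count_space UNIV"

definition l2sq :: "((real \<times> real) \<times> int \<Rightarrow> complex) \<Rightarrow> ennreal" where
  "l2sq \<xi> = (\<integral>\<^sup>+ z. ennreal ((norm (\<xi> z))\<^sup>2) \<partial>hmeas)"

definition inL2 :: "((real \<times> real) \<times> int \<Rightarrow> complex) \<Rightarrow> bool" where
  "inL2 \<xi> \<longleftrightarrow> \<xi> \<in> borel_measurable hmeas \<and> l2sq \<xi> < \<infinity>"

definition l2norm :: "((real \<times> real) \<times> int \<Rightarrow> complex) \<Rightarrow> real" where
  "l2norm \<xi> = sqrt (enn2real (l2sq \<xi>))"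

definition piop :: "real \<Rightarrow> real \<Rightarrow> real \<Rightarrow> qhf \<Rightarrow> ((real \<times> real) \<times> int \<Rightarrow> complex)
                      \<Rightarrow> ((real \<times> real) \<times> int \<Rightarrow> complex)" where
  "piop h mu nu \<Phi> \<xi> = (\<lambda>((x, y), p). \<Sum>\<^sub>\<infinity>q\<in>UNIV.
      \<Phi> (x - h * of_int (q - 2 * p) * mu) (y - h * of_int (q - 2 * p) * nu) q * \<xi> ((x, y), p - q))"

definition cnorm :: "real \<Rightarrow> real \<Rightarrow> real \<Rightarrow> qhf \<Rightarrow> real" where
  "cnorm h mu nu \<Phi> = Sup {l2norm (piop h mu nu \<Phi> \<xi>) | \<xi>. inL2 \<xi> \<and> l2norm \<xi> \<le> 1}"

definition fnorm :: "nat \<Rightarrow> real \<Rightarrow> real \<Rightarrow> real \<Rightarrow> (qhf \<Rightarrow> real) \<Rightarrow> real" where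
  "fnorm c h mu nu \<omega> = Sup {\<bar>\<omega> a\<bar> | a. a \<in> Asa c \<and> cnorm h mu nu a \<le> 1}"

text \<open>States on A, represented as functions extensional on A (undefined outside A).\<close>
definition states :: "nat \<Rightarrow> real \<Rightarrow> real \<Rightarrow> real \<Rightarrow> (qhf \<Rightarrow> real) set" where
  "states c h mu nu = {\<omega>. \<omega> \<in> extensional (Asa c) \<and>
      (\<forall>a\<in>Asa c. \<forall>b\<in>Asa c. \<omega> (qadd a b) = \<omega> a + \<omega> b) \<and>
      (\<forall>r. \<forall>a\<in>Asa c. \<omega> (qscale r a) = r * \<omega> a) \<and>
      (\<exists>C. \<forall>a\<in>Asa c. \<bar>\<omega> a\<bar> \<le> C * cnorm h mu nu a) \<and>
      \<omega> qI = 1 \<and> fnorm c h mu nu \<omega> = 1}"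

definition norm_ii1 :: "qhf \<Rightarrow> real" where
  "norm_ii1 \<phi> = (\<Sum>\<^sub>\<infinity>p\<in>UNIV. Sup {norm (\<phi> x y p) | x y. True})"

definition delta1 :: "qhf \<Rightarrow> qhf" where
  "delta1 \<phi> = (\<lambda>x y p. - pdx \<phi> x y p)"

definition delta2 :: "nat \<Rightarrow> qhf \<Rightarrow> qhf" where
  "delta2 c \<phi> = (\<lambda>x y p. 2 * of_real pi * \<i> * of_nat c * of_int p * of_real x * \<phi> x y p - pdy \<phi> x y p)"

definition delta3 :: "qhf \<Rightarrow> qhf" where
  "delta3 \<phi> = (\<lambda>x y p. 2 * of_real pi * \<i> * of_int p * \<phi> x y p)"

definition Lip :: "nat \<Rightarrow> qhf \<Rightarrow> real" where
  "Lip c \<phi> = max (norm_ii1 (delta1 \<phi>)) (max (norm_ii1 (delta2 c \<phi>)) (norm_ii1 (delta3 \<phi>)))"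

definition rhoL :: "nat \<Rightarrow> (qhf \<Rightarrow> real) \<Rightarrow> (qhf \<Rightarrow> real) \<Rightarrow> ereal" where
  "rhoL c \<omega>1 \<omega>2 = (SUP a\<in>{a \<in> Asa c. Lip c a \<le> 1}. ereal \<bar>\<omega>1 a - \<omega>2 a\<bar>)"

definition dist_topology :: "'a set \<Rightarrow> ('a \<Rightarrow> 'a \<Rightarrow> ereal) \<Rightarrow> 'a topology" where
  "dist_topology S d = topology (\<lambda>U. U \<subseteq> S \<and>
      (\<forall>x\<in>U. \<exists>e>0. \<forall>y\<in>S. d x y < ereal e \<longrightarrow> y \<in> U))"

definition weak_star_topology :: "nat \<Rightarrow> (qhf \<Rightarrow> real) set \<Rightarrow> (qhf \<Rightarrow> real) topology" where
  "weak_star_topology c S = subtopology (product_topology (\<lambda>_. euclideanreal) (Asa c)) S"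

end

theory Submission
  imports Defs
begin


lemma mvt_cplx:
  fixes f f' :: "real \<Rightarrow> complex"
  assumes "\<And>t. t \<in> {a..b} \<Longrightarrow> (f has_vector_derivative f' t) (at t)"
    and "\<And>t. t \<in> {a..b} \<Longrightarrow> norm (f' t) \<le> B"
    and "x \<in> {a..b}" "y \<in> {a..b}"
  shows "norm (f x - f y) \<le> B * \<bar>x - y\<bar>"
proof -
  have "norm (f x - f y) \<le> B * norm (x - y)"
    apply (rule differentiable_bound[where S="{a..b}" and f'="\<lambda>t h. h *\<^sub>R f' t"])
    using assms by (auto simp: has_vector_derivative_def onorm_scaleR_left onorm_id
        intro: has_derivative_at_withinI)
  then show ?thesis by simp
qed

lemma iter_pdy:
  assumes D0: "D 0 0 = (\<lambda>x y. \<Phi> x y p)"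
    and Dd: "\<forall>m n x y. ((\<lambda>t. D m n t y) has_vector_derivative D (Suc m) n x y) (at x) \<and>
                 ((\<lambda>t. D m n x t) has_vector_derivative D m (Suc n) x y) (at y)"
  shows "(pdy ^^ n) \<Phi> x y p = D 0 n x y"
proof (induction n arbitrary: x y)
  case 0 then show ?case using D0 by simp
next
  case (Suc n)
  have "(pdy ^^ Suc n) \<Phi> x y p = vector_derivative (\<lambda>t. (pdy ^^ n) \<Phi> x t p) (at y)"
    by (simp only: funpow.simps o_apply pdy_def)
  also have "(\<lambda>t. (pdy ^^ n) \<Phi> x t p) = (\<lambda>t. D 0 n x t)" using Suc by auto
  also have "vector_derivative (\<lambda>t. D 0 n x t) (at y) = D 0 (Suc n) x y"
    using Dd by (intro vector_derivative_at) auto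
  finally show ?case .
qed

lemma iter_pd:
  assumes D0: "D 0 0 = (\<lambda>x y. \<Phi> x y p)"
    and Dd: "\<forall>m n x y. ((\<lambda>t. D m n t y) has_vector_derivative D (Suc m) n x y) (at x) \<and>
                 ((\<lambda>t. D m n x t) has_vector_derivative D m (Suc n) x y) (at y)"
  shows "(pdx ^^ m) ((pdy ^^ n) \<Phi>) x y p = D m n x y"
proof (induction m arbitrary: x y)
  case 0 show ?case using iter_pdy[where D=D and \<Phi>=\<Phi> and p=p, OF D0 Dd] by (simp only: funpow_0)
next
  case (Suc m)
  have "(pdx ^^ Suc m) ((pdy ^^ n) \<Phi>) x y p = vector_derivative (\<lambda>t. (pdx ^^ m) ((pdy ^^ n) \<Phi>) t y p) (at x)"
    by (simp only: funpow.simps o_apply pdx_def)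
  also have "(\<lambda>t. (pdx ^^ m) ((pdy ^^ n) \<Phi>) t y p) = (\<lambda>t. D m n t y)" using Suc by auto
  also have "vector_derivative (\<lambda>t. D m n t y) (at x) = D (Suc m) n x y"
    using Dd by (intro vector_derivative_at) auto
  finally show ?case .
qed

lemma smooth_derivs:
  assumes "smooth_xy (\<lambda>x y. \<Phi> x y p)"
  shows "((\<lambda>t. \<Phi> t y p) has_vector_derivative pdx \<Phi> x y p) (at x)"
    and "((\<lambda>t. \<Phi> x t p) has_vector_derivative pdy \<Phi> x y p) (at y)"
proof -
  obtain D where D0: "D 0 0 = (\<lambda>x y. \<Phi> x y p)"
    and Dd: "\<forall>m n x y. ((\<lambda>t. D m n t y) has_vector_derivative D (Suc m) n x y) (at x) \<and>
                 ((\<lambda>t. D m n x t) has_vector_derivative D m (Suc n) x y) (at y)"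
    using assms unfolding smooth_xy_def by blast
  have 1: "pdx \<Phi> x y p = D 1 0 x y" using iter_pd[where D=D and \<Phi>=\<Phi> and p=p and m=1 and n=0, OF D0 Dd] by simp
  have 2: "pdy \<Phi> x y p = D 0 1 x y" using iter_pd[where D=D and \<Phi>=\<Phi> and p=p and m=0 and n=1, OF D0 Dd] by simp
  have "(\<lambda>t. \<Phi> t y p) = (\<lambda>t. D 0 0 t y)" "(\<lambda>t. \<Phi> x t p) = (\<lambda>t. D 0 0 x t)" using D0 by auto
  then show "((\<lambda>t. \<Phi> t y p) has_vector_derivative pdx \<Phi> x y p) (at x)"
    and "((\<lambda>t. \<Phi> x t p) has_vector_derivative pdy \<Phi> x y p) (at y)"
    using Dd 1 2 by (auto simp: One_nat_def)
qed

lemma ScD_all: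
  assumes "\<Phi> \<in> Sc c"
  shows "(\<forall>p. smooth_xy (\<lambda>x y. \<Phi> x y p)) \<and>
     (\<forall>x y p. \<Phi> x (y + 1) p = \<Phi> x y p) \<and>
     (\<forall>k::int. \<forall>x y p. \<Phi> (x + of_int k) y p = ee (real c * of_int k * of_int p * y) * \<Phi> x y p) \<and>
     (\<forall>(P::real poly) m n (K::(real \<times> real) set). compact K \<longrightarrow>
        (\<exists>B. \<forall>x y p. (x, y) \<in> K \<longrightarrow>
           norm (complex_of_real (poly P (of_int p)) * ((pdx ^^ m) ((pdy ^^ n) \<Phi>)) x y p) \<le> B))"
  using assms unfolding Sc_def by (rule CollectD)

lemma ScD:
  assumes "\<Phi> \<in> Sc c"
  shows "smooth_xy (\<lambda>x y. \<Phi> x y p)"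
    and "\<Phi> x (y + 1) p = \<Phi> x y p"
    and "\<Phi> (x + of_int k) y p = ee (real c * of_int k * of_int p * y) * \<Phi> x y p"
    and "compact K \<Longrightarrow> \<exists>B. \<forall>x y p. (x, y) \<in> K \<longrightarrow>
           norm (complex_of_real (poly P (of_int p)) * ((pdx ^^ m) ((pdy ^^ n) \<Phi>)) x y p) \<le> B"
proof -
  note X = ScD_all[OF assms]
  show "smooth_xy (\<lambda>x y. \<Phi> x y p)" using X by (elim conjE allE)
  show "\<Phi> x (y + 1) p = \<Phi> x y p" using X by (elim conjE allE)
  show "\<Phi> (x + of_int k) y p = ee (real c * of_int k * of_int p * y) * \<Phi> x y p" using X by (elim conjE allE)
  show "compact K \<Longrightarrow> \<exists>B. \<forall>x y p. (x, y) \<in> K \<longrightarrow>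
           norm (complex_of_real (poly P (of_int p)) * ((pdx ^^ m) ((pdy ^^ n) \<Phi>)) x y p) \<le> B"
    using X by (elim conjE allE impE)
qed

lemma Sc_dx: assumes "\<Phi> \<in> Sc c" shows "((\<lambda>t. \<Phi> t y p) has_vector_derivative pdx \<Phi> x y p) (at x)"
  by (rule smooth_derivs(1)[where \<Phi>=\<Phi> and p=p, OF ScD(1)[OF assms, of p]])
lemma Sc_dy: assumes "\<Phi> \<in> Sc c" shows "((\<lambda>t. \<Phi> x t p) has_vector_derivative pdy \<Phi> x y p) (at y)"
  by (rule smooth_derivs(2)[where \<Phi>=\<Phi> and p=p, OF ScD(1)[OF assms, of p]])

lemma Sc_yper: assumes "\<Phi> \<in> Sc c" shows "\<Phi> x (y + of_int l) p = \<Phi> x y p"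
proof (induction l arbitrary: y rule: int_induct[where k=0])
  case base then show ?case by simp
next
  case (step1 i) 
  have "\<Phi> x (y + of_int (i + 1)) p = \<Phi> x ((y + of_int i) + 1) p" by (simp add: algebra_simps)
  also have "\<dots> = \<Phi> x (y + of_int i) p" using ScD(2)[OF assms] by blast
  finally show ?case using step1 by simp
next
  case (step2 i)
  have "\<Phi> x (y + of_int (i - 1)) p = \<Phi> x ((y + of_int (i - 1)) + 1) p" using ScD(2)[OF assms] by metis
  also have "\<dots> = \<Phi> x (y + of_int i) p" by (simp add: algebra_simps)
  finally show ?case using step2 by simp
qed

lemma norm_ee[simp]: "norm (ee t) = 1" by (simp add: ee_def)

lemma ee_deriv: "((\<lambda>t. ee (a * t)) has_vector_derivative (2 * of_real pi * \<i> * of_real a * ee (a * y))) (at y)"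
proof -
  have e: "(\<lambda>t. ee (a * t)) = (\<lambda>t. (\<lambda>z. exp (\<i> * (2 * of_real pi * of_real a * z))) (of_real t))"
    by (auto simp: ee_def cis_conv_exp algebra_simps)
  have "((\<lambda>z. exp (\<i> * (2 * of_real pi * of_real a * z))) has_field_derivative
        (\<i> * (2 * of_real pi * of_real a)) * exp (\<i> * (2 * of_real pi * of_real a * of_real y))) (at (of_real y))"
    by (auto intro!: derivative_eq_intros)
  then have "((\<lambda>t. ee (a * t)) has_vector_derivative
        (\<i> * (2 * of_real pi * of_real a)) * exp (\<i> * (2 * of_real pi * of_real a * of_real y))) (at y)"
    unfolding e by (rule has_vector_derivative_real_field)
  moreover have "(\<i> * (2 * of_real pi * of_real a)) * exp (\<i> * (2 * of_real pi * of_real a * of_real y))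
      = 2 * of_real pi * \<i> * of_real a * ee (a * y)"
    by (simp add: ee_def cis_conv_exp algebra_simps)
  ultimately show ?thesis by simp
qed

lemma ring_aux: "(e::complex) * P + (q * e) * F = e * (q * F + P)"
  by (simp add: algebra_simps)

lemma shift_deriv: "((\<lambda>t::real. t + r) has_vector_derivative 1) (at x)"
  using has_vector_derivative_add[OF has_vector_derivative_id has_vector_derivative_const, of r "at x"] by simp

lemma pdx_xper:
  assumes "\<Phi> \<in> Sc c"
  shows "pdx \<Phi> (x + of_int k) y p = ee (real c * of_int k * of_int p * y) * pdx \<Phi> x y p"
proof -
  have d1: "((\<lambda>t. \<Phi> (t + of_int k) y p) has_vector_derivative pdx \<Phi> (x + of_int k) y p) (at x)"
    using vector_diff_chain_at[OF shift_deriv Sc_dx[OF assms]] by (simp add: o_def)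
  have "(\<lambda>t. \<Phi> (t + of_int k) y p) = (\<lambda>t. ee (real c * of_int k * of_int p * y) * \<Phi> t y p)"
    using ScD(3)[OF assms] by auto
  then have d2: "((\<lambda>t. \<Phi> (t + of_int k) y p) has_vector_derivative ee (real c * of_int k * of_int p * y) * pdx \<Phi> x y p) (at x)"
    using has_vector_derivative_mult_right[OF Sc_dx[OF assms]] by simp
  show ?thesis using vector_derivative_unique_at[OF d1 d2] .
qed

lemma pdy_xper:
  assumes "\<Phi> \<in> Sc c"
  shows "pdy \<Phi> (x + of_int k) y p = ee (real c * of_int k * of_int p * y) *
           (2 * of_real pi * \<i> * of_real (real c * of_int k * of_int p) * \<Phi> x y p + pdy \<Phi> x y p)"
proof -
  have "(\<lambda>t. \<Phi> (x + of_int k) t p) = (\<lambda>t. ee ((real c * of_int k * of_int p) * t) * \<Phi> x t p)"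
    using ScD(3)[OF assms] by auto
  moreover have "((\<lambda>t. ee ((real c * of_int k * of_int p) * t) * \<Phi> x t p) has_vector_derivative
      ee ((real c * of_int k * of_int p) * y) * pdy \<Phi> x y p +
      (2 * of_real pi * \<i> * of_real (real c * of_int k * of_int p) * ee ((real c * of_int k * of_int p) * y)) * \<Phi> x y p) (at y)"
    by (rule has_vector_derivative_mult[OF ee_deriv Sc_dy[OF assms]])
  ultimately have d: "((\<lambda>t. \<Phi> (x + of_int k) t p) has_vector_derivative
      ee ((real c * of_int k * of_int p) * y) * pdy \<Phi> x y p +
      (2 * of_real pi * \<i> * of_real (real c * of_int k * of_int p) * ee ((real c * of_int k * of_int p) * y)) * \<Phi> x y p) (at y)"
    by simp
  have "pdy \<Phi> (x + of_int k) y p = vector_derivative (\<lambda>t. \<Phi> (x + of_int k) t p) (at y)"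
    by (simp add: pdy_def)
  also have "\<dots> = ee ((real c * of_int k * of_int p) * y) * pdy \<Phi> x y p +
      (2 * of_real pi * \<i> * of_real (real c * of_int k * of_int p) * ee ((real c * of_int k * of_int p) * y)) * \<Phi> x y p"
    by (rule vector_derivative_at[OF d])
  also have "\<dots> = ee ((real c * of_int k * of_int p) * y) *
           (2 * of_real pi * \<i> * of_real (real c * of_int k * of_int p) * \<Phi> x y p + pdy \<Phi> x y p)"
    by (rule ring_aux)
  finally show ?thesis .
qed

lemma pdx_yper: assumes "\<Phi> \<in> Sc c" shows "pdx \<Phi> x (y + of_int l) p = pdx \<Phi> x y p"
  using Sc_yper[OF assms] by (simp add: pdx_def)

lemma pdy_yper: assumes "\<Phi> \<in> Sc c" shows "pdy \<Phi> x (y + of_int l) p = pdy \<Phi> x y p"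
proof -
  have d: "((\<lambda>t. \<Phi> x (t + of_int l) p) has_vector_derivative pdy \<Phi> x (y + of_int l) p) (at y)"
    using vector_diff_chain_at[OF shift_deriv Sc_dy[OF assms]] by (simp add: o_def)
  have "(\<lambda>t. \<Phi> x (t + of_int l) p) = (\<lambda>t. \<Phi> x t p)" using Sc_yper[OF assms] by auto
  then have d': "((\<lambda>t. \<Phi> x t p) has_vector_derivative pdy \<Phi> x (y + of_int l) p) (at y)"
    using d by simp
  show ?thesis using vector_derivative_unique_at[OF d' Sc_dy[OF assms]] .
qed



lemma summable_inv_sq_nat: "(\<lambda>n::nat. 1 / (1 + (real n)\<^sup>2)) summable_on UNIV"
proof -
  have s: "summable (\<lambda>n::nat. 1 / (1 + (real n)\<^sup>2))"
  proof (rule summable_comparison_test'[where g="\<lambda>n. inverse (real n ^ 2)" and N=1])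
    show "summable (\<lambda>n. inverse (real n ^ 2))" by (rule inverse_power_summable) auto
    fix n :: nat assume "1 \<le> n"
    then show "norm (1 / (1 + (real n)\<^sup>2)) \<le> inverse (real n ^ 2)"
      by (simp add: divide_simps add_pos_nonneg)
  qed
  have "Infinite_Set_Sum.abs_summable_on (\<lambda>n::nat. 1 / (1 + (real n)\<^sup>2)) UNIV"
    using s by (simp add: abs_summable_on_nat_iff')
  then have "(\<lambda>n::nat. norm (1 / (1 + (real n)\<^sup>2))) summable_on UNIV"
    using abs_summable_equivalent[where f="\<lambda>n::nat. 1 / (1 + (real n)\<^sup>2)" and A=UNIV] by blast
  then show ?thesis by (simp add: add_pos_nonneg)
qed

lemma summable_inv_sq_int: "(\<lambda>p::int. 1 / (1 + (real_of_int p)\<^sup>2)) summable_on UNIV"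
proof -
  let ?f = "\<lambda>p::int. 1 / (1 + (real_of_int p)\<^sup>2)"
  have U: "UNIV = range int \<union> range (\<lambda>n. - int n - 1)"
  proof -
    { fix p :: int have "p \<in> range int \<union> range (\<lambda>n. - int n - 1)"
      proof (cases "p \<ge> 0")
        case True then show ?thesis by (metis UnI1 nonneg_int_cases rangeI)
      next
        case False then have "p = - int (nat (- p - 1)) - 1" by simp
        then show ?thesis by blast
      qed }
    then show ?thesis by blast
  qed
  have a: "?f summable_on range int"
    by (subst summable_on_reindex) (use summable_inv_sq_nat in \<open>auto simp: o_def inj_on_def\<close>)
  have b: "?f summable_on range (\<lambda>n. - int n - 1)"
  proof (subst summable_on_reindex)
    show "inj_on (\<lambda>n. - int n - 1) UNIV" by (auto simp: inj_on_def)
    show "(?f \<circ> (\<lambda>n. - int n - 1)) summable_on UNIV"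
    proof (rule summable_on_comparison_test[OF summable_inv_sq_nat])
      fix n :: nat
      have "(real n)\<^sup>2 \<le> (real_of_int (- int n - 1))\<^sup>2"
        by (simp add: power2_eq_square algebra_simps)
      then have "1 / (1 + (real_of_int (- int n - 1))\<^sup>2) \<le> 1 / (1 + (real n)\<^sup>2)"
        by (intro divide_left_mono) (auto intro!: add_pos_nonneg mult_pos_pos)
      moreover have "0 \<le> 1 / (1 + (real_of_int (- int n - 1))\<^sup>2)" by (intro divide_nonneg_nonneg) auto
      ultimately show "(?f \<circ> (\<lambda>n. - int n - 1)) n \<le> 1 / (1 + (real n)\<^sup>2)"
         "0 \<le> (?f \<circ> (\<lambda>n. - int n - 1)) n" by (simp_all only: o_def)
    qed
  qed
  have "?f summable_on (range int \<union> range (\<lambda>n. - int n - 1))"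
    by (rule summable_on_Un_disjoint[OF a b]) auto
  then show ?thesis using U by simp
qed

definition sp :: "qhf \<Rightarrow> int \<Rightarrow> real" where
  "sp g p = Sup {norm (g x y p) | x y. True}"
definition wt :: "int \<Rightarrow> real" where
  "wt p = 1 + (real_of_int p)\<^sup>2"
definition bnd :: "qhf \<Rightarrow> real \<Rightarrow> bool" where
  "bnd g B \<longleftrightarrow> (\<forall>x y p. norm (g x y p) \<le> B / wt p)"
definition good :: "qhf \<Rightarrow> bool" where
  "good g \<longleftrightarrow> (\<exists>B. bnd g B)"

lemma wt_pos[simp]: "0 < wt p" unfolding wt_def by (simp add: add_pos_nonneg)

lemma norm_ii1_sp: "norm_ii1 g = infsum (sp g) UNIV"
  unfolding norm_ii1_def sp_def ..

lemma sp_set_ne: "{norm (g x y p) | x y. True} \<noteq> {}" by blast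

lemma sp_facts:
  assumes "bnd g B"
  shows "norm (g x y p) \<le> sp g p" "sp g p \<le> B / wt p" "0 \<le> sp g p" "sp g summable_on UNIV"
proof -
  have bd: "bdd_above {norm (g x y p) | x y. True}" for p
    using assms unfolding bnd_def bdd_above_def by blast
  show 1: "norm (g x y p) \<le> sp g p" for x y p
    unfolding sp_def by (rule cSup_upper[OF _ bd]) blast
  show 2: "sp g p \<le> B / wt p" for p
    unfolding sp_def using assms unfolding bnd_def by (intro cSup_least) auto
  show 3: "0 \<le> sp g p" for p using 1[of 0 0 p] norm_ge_zero order_trans by blast
  have B0: "0 \<le> B" using 3[of 0] 2[of 0] by (simp add: wt_def)
  show "sp g summable_on UNIV"
  proof (rule summable_on_comparison_test[where f="\<lambda>p. B * (1 / (1 + (real_of_int p)\<^sup>2))"])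
    show "(\<lambda>p. B * (1 / (1 + (real_of_int p)\<^sup>2))) summable_on UNIV"
      by (rule summable_on_cmult_right[OF summable_inv_sq_int])
    show "sp g p \<le> B * (1 / (1 + (real_of_int p)\<^sup>2))" for p using 2[of p] by (simp add: wt_def)
    show "0 \<le> sp g p" for p by (rule 3)
  qed
qed

lemma good_sp:
  assumes "good g"
  shows "norm (g x y p) \<le> sp g p" "0 \<le> sp g p" "sp g summable_on UNIV"
  using assms sp_facts unfolding good_def by blast+

lemma le_infsum_pt:
  fixes f :: "int \<Rightarrow> real"
  assumes "f summable_on UNIV" "\<And>q. 0 \<le> f q"
  shows "f p \<le> infsum f UNIV"
proof -
  have "infsum f {p} \<le> infsum f UNIV"
    by (rule infsum_mono_neutral) (use assms in auto)
  then show ?thesis by simp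
qed

lemma norm_ii1_nonneg: "good g \<Longrightarrow> 0 \<le> norm_ii1 g"
  unfolding norm_ii1_sp using good_sp by (intro infsum_nonneg) blast

lemma sp_le_norm_ii1: "good g \<Longrightarrow> sp g p \<le> norm_ii1 g"
  unfolding norm_ii1_sp using good_sp by (intro le_infsum_pt) blast+

lemma pt_le_norm_ii1: "good g \<Longrightarrow> norm (g x y p) \<le> norm_ii1 g"
  using good_sp(1) sp_le_norm_ii1 order_trans by blast

lemma bnd_add: "bnd f B1 \<Longrightarrow> bnd g B2 \<Longrightarrow> bnd (qadd f g) (B1 + B2)"
  unfolding bnd_def qadd_def
proof (intro allI)
  fix x y p assume a: "\<forall>x y p. norm (f x y p) \<le> B1 / wt p" "\<forall>x y p. norm (g x y p) \<le> B2 / wt p"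
  have "norm (f x y p + g x y p) \<le> norm (f x y p) + norm (g x y p)" by (rule norm_triangle_ineq)
  also have "\<dots> \<le> B1 / wt p + B2 / wt p" using a by (intro add_mono) auto
  finally show "norm (f x y p + g x y p) \<le> (B1 + B2) / wt p" by (simp add: add_divide_distrib)
qed

lemma bnd_scale: "bnd f B \<Longrightarrow> bnd (qscale r f) (\<bar>r\<bar> * B)"
  unfolding bnd_def qscale_def
proof (intro allI)
  fix x y p assume a: "\<forall>x y p. norm (f x y p) \<le> B / wt p"
  have "norm (complex_of_real r * f x y p) = \<bar>r\<bar> * norm (f x y p)" by (simp add: norm_mult)
  also have "\<dots> \<le> \<bar>r\<bar> * (B / wt p)" using a by (intro mult_left_mono) auto
  finally show "norm (complex_of_real r * f x y p) \<le> \<bar>r\<bar> * B / wt p" by simp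
qed

lemma good_add: "good f \<Longrightarrow> good g \<Longrightarrow> good (qadd f g)"
  unfolding good_def using bnd_add by blast
lemma good_scale: "good f \<Longrightarrow> good (qscale r f)"
  unfolding good_def using bnd_scale by blast

lemma sp_add_le: assumes "good f" "good g" shows "sp (qadd f g) p \<le> sp f p + sp g p"
  unfolding sp_def[of "qadd f g"]
proof (rule cSup_least)
  show "{norm (qadd f g x y p) |x y. True} \<noteq> {}" by blast
  fix v assume "v \<in> {norm (qadd f g x y p) |x y. True}"
  then obtain x y where v: "v = norm (f x y p + g x y p)" by (auto simp: qadd_def)
  have "norm (f x y p + g x y p) \<le> norm (f x y p) + norm (g x y p)" by (rule norm_triangle_ineq)
  also have "\<dots> \<le> sp f p + sp g p" using good_sp(1) assms by (intro add_mono) auto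
  finally show "v \<le> sp f p + sp g p" using v by simp
qed

lemma norm_ii1_add: assumes "good f" "good g"
  shows "norm_ii1 (qadd f g) \<le> norm_ii1 f + norm_ii1 g"
proof -
  have "infsum (sp (qadd f g)) UNIV \<le> infsum (\<lambda>p. sp f p + sp g p) UNIV"
  proof (rule infsum_mono)
    show "sp (qadd f g) summable_on UNIV" using good_sp(3)[OF good_add[OF assms]] .
    show "(\<lambda>p. sp f p + sp g p) summable_on UNIV"
      by (rule summable_on_add[OF good_sp(3)[OF assms(1)] good_sp(3)[OF assms(2)]])
    show "sp (qadd f g) p \<le> sp f p + sp g p" for p using sp_add_le[OF assms] .
  qed
  also have "\<dots> = infsum (sp f) UNIV + infsum (sp g) UNIV"
    by (rule infsum_add) (use assms good_sp in auto)
  finally show ?thesis unfolding norm_ii1_sp .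
qed

lemma sp_scale: assumes "good f" shows "sp (qscale r f) p = \<bar>r\<bar> * sp f p"
proof (cases "r = 0")
  case True
  have "{norm (qscale r f x y p) |x y. True} = {0}" using True by (auto simp: qscale_def)
  then show ?thesis using True by (simp add: sp_def)
next
  case False
  have g2: "good (qscale r f)" using good_scale assms by blast
  have "sp (qscale r f) p \<le> \<bar>r\<bar> * sp f p"
    unfolding sp_def[of "qscale r f"]
  proof (rule cSup_least)
    show "{norm (qscale r f x y p) |x y. True} \<noteq> {}" by blast
    fix v assume "v \<in> {norm (qscale r f x y p) |x y. True}"
    then obtain x y where v: "v = \<bar>r\<bar> * norm (f x y p)" by (auto simp: qscale_def norm_mult)
    show "v \<le> \<bar>r\<bar> * sp f p" unfolding v using good_sp(1)[OF assms] by (intro mult_left_mono) auto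
  qed
  moreover have "sp f p \<le> sp (qscale r f) p / \<bar>r\<bar>"
    unfolding sp_def[of f]
  proof (rule cSup_least)
    show "{norm (f x y p) |x y. True} \<noteq> {}" by blast
    fix v assume "v \<in> {norm (f x y p) |x y. True}"
    then obtain x y where v: "v = norm (f x y p)" by auto
    have "\<bar>r\<bar> * norm (f x y p) = norm (qscale r f x y p)" by (simp add: qscale_def norm_mult)
    also have "\<dots> \<le> sp (qscale r f) p" using good_sp(1)[OF g2] by blast
    finally show "v \<le> sp (qscale r f) p / \<bar>r\<bar>" using False v by (simp add: field_simps)
  qed
  then have "\<bar>r\<bar> * sp f p \<le> sp (qscale r f) p" using False by (simp add: field_simps)
  ultimately show ?thesis by linarith
qed

lemma norm_ii1_scale: assumes "good f" shows "norm_ii1 (qscale r f) = \<bar>r\<bar> * norm_ii1 f"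
  unfolding norm_ii1_sp sp_scale[OF assms] by (rule infsum_cmult_right) (use assms good_sp in auto)

definition qp :: "qhf \<Rightarrow> bool" where
  "qp g \<longleftrightarrow> (\<forall>k::int. \<forall>x y p. norm (g (x + of_int k) y p) = norm (g x y p)) \<and>
            (\<forall>l::int. \<forall>x y p. g x (y + of_int l) p = g x y p)"

lemma qp_reduce:
  assumes "qp g"
  shows "\<exists>x'\<in>{0..1}. \<exists>y'\<in>{0..1}. norm (g x y p) = norm (g x' y' p)"
proof -
  define x' where "x' = x - of_int \<lfloor>x\<rfloor>"
  define y' where "y' = y - of_int \<lfloor>y\<rfloor>"
  have x'r: "x' \<in> {0..1}" unfolding x'_def by (auto simp: floor_le_iff less_imp_le) linarith
  have y'r: "y' \<in> {0..1}" unfolding y'_def by (auto simp: floor_le_iff less_imp_le) linarith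
  have "norm (g x y p) = norm (g (x' + of_int \<lfloor>x\<rfloor>) y p)" by (simp add: x'_def)
  also have "\<dots> = norm (g x' y p)" using assms unfolding qp_def by blast
  also have "g x' y p = g x' (y' + of_int \<lfloor>y\<rfloor>) p" by (simp add: y'_def)
  also have "\<dots> = g x' y' p" using assms unfolding qp_def by blast
  finally show ?thesis using x'r y'r by blast
qed

lemma qp_bnd:
  assumes "qp g" "\<And>x y p. x \<in> {0..1} \<Longrightarrow> y \<in> {0..1} \<Longrightarrow> norm (g x y p) \<le> B / wt p"
  shows "bnd g B"
  unfolding bnd_def using qp_reduce[OF assms(1)] assms(2) by metis



lemma qp_Sc: assumes "\<Phi> \<in> Sc c" shows "qp \<Phi>"
  unfolding qp_def using ScD(3)[OF assms] Sc_yper[OF assms] by (simp add: norm_mult)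

lemma qp_d1: assumes "\<Phi> \<in> Sc c" shows "qp (delta1 \<Phi>)"
  unfolding qp_def delta1_def using pdx_xper[OF assms] pdx_yper[OF assms] by (simp add: norm_mult)

lemma qp_d3: assumes "\<Phi> \<in> Sc c" shows "qp (delta3 \<Phi>)"
  unfolding qp_def delta3_def using ScD(3)[OF assms] Sc_yper[OF assms] by (simp add: norm_mult)

lemma d2_xper:
  assumes "\<Phi> \<in> Sc c"
  shows "delta2 c \<Phi> (x + of_int k) y p = ee (real c * of_int k * of_int p * y) * delta2 c \<Phi> x y p"
proof -
  define E where "E = ee (real c * of_int k * of_int p * y)"
  have "delta2 c \<Phi> (x + of_int k) y p =
     2 * of_real pi * \<i> * of_nat c * of_int p * of_real (x + of_int k) * (E * \<Phi> x y p) -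
     E * (2 * of_real pi * \<i> * of_real (real c * of_int k * of_int p) * \<Phi> x y p + pdy \<Phi> x y p)"
    unfolding delta2_def E_def using ScD(3)[OF assms] pdy_xper[OF assms] by simp
  also have "\<dots> = E * delta2 c \<Phi> x y p"
    unfolding delta2_def by (simp add: algebra_simps)
  finally show ?thesis unfolding E_def .
qed

lemma qp_d2: assumes "\<Phi> \<in> Sc c" shows "qp (delta2 c \<Phi>)"
proof -
  have "delta2 c \<Phi> x (y + of_int l) p = delta2 c \<Phi> x y p" for x y l p
    unfolding delta2_def using Sc_yper[OF assms] pdy_yper[OF assms] by simp
  then show ?thesis unfolding qp_def using d2_xper[OF assms] by (simp add: norm_mult)
qed

lemma poly1: "poly [:1, 0, 1:] (real_of_int p) = wt p"
  by (simp add: wt_def power2_eq_square)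
lemma poly2: "poly [:0, 1, 0, 1:] (real_of_int p) = real_of_int p * wt p"
  by (simp add: wt_def power2_eq_square algebra_simps)

lemma Sc_Kbound:
  assumes "\<Phi> \<in> Sc c" and "\<And>p. poly P (real_of_int p) = q p * wt p"
  shows "\<exists>B. \<forall>x\<in>{0..1}. \<forall>y\<in>{0..1}. \<forall>p. \<bar>q p\<bar> * norm (((pdx ^^ m) ((pdy ^^ n) \<Phi>)) x y p) \<le> B / wt p"
proof -
  have K: "compact ({0..1::real} \<times> {0..1::real})" by (intro compact_Times compact_Icc)
  obtain B where B: "\<forall>x y p. (x, y) \<in> {0..1::real} \<times> {0..1::real} \<longrightarrow>
       norm (complex_of_real (poly P (of_int p)) * ((pdx ^^ m) ((pdy ^^ n) \<Phi>)) x y p) \<le> B"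
    using ScD(4)[OF assms(1) K] by blast
  show ?thesis
  proof (intro exI ballI allI)
    fix x y p assume "x \<in> {0..1::real}" "y \<in> {0..1::real}"
    then have "norm (complex_of_real (poly P (of_int p)) * ((pdx ^^ m) ((pdy ^^ n) \<Phi>)) x y p) \<le> B"
      using B by blast
    then have "\<bar>q p\<bar> * wt p * norm (((pdx ^^ m) ((pdy ^^ n) \<Phi>)) x y p) \<le> B"
      using assms(2) wt_pos[of p] by (simp add: norm_mult abs_mult)
    then show "\<bar>q p\<bar> * norm (((pdx ^^ m) ((pdy ^^ n) \<Phi>)) x y p) \<le> B / wt p"
      using wt_pos[of p] by (simp add: field_simps)
  qed
qed

lemma Sc_good:
  assumes "\<Phi> \<in> Sc c"
  shows "good \<Phi>" "good (delta1 \<Phi>)" "good (delta2 c \<Phi>)" "good (delta3 \<Phi>)"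
proof -
  obtain B0 where B0: "\<forall>x\<in>{0..1}. \<forall>y\<in>{0..1}. \<forall>p. \<bar>1\<bar> * norm (((pdx ^^ 0) ((pdy ^^ 0) \<Phi>)) x y p) \<le> B0 / wt p"
    using Sc_Kbound[OF assms, of "[:1, 0, 1:]" "\<lambda>_. 1"] poly1 by (metis mult_1)
  obtain B1 where B1: "\<forall>x\<in>{0..1}. \<forall>y\<in>{0..1}. \<forall>p. \<bar>real_of_int p\<bar> * norm (((pdx ^^ 0) ((pdy ^^ 0) \<Phi>)) x y p) \<le> B1 / wt p"
    using Sc_Kbound[OF assms, of "[:0, 1, 0, 1:]" "\<lambda>p. real_of_int p"] poly2 by blast
  obtain B2 where B2: "\<forall>x\<in>{0..1}. \<forall>y\<in>{0..1}. \<forall>p. \<bar>1\<bar> * norm (((pdx ^^ 1) ((pdy ^^ 0) \<Phi>)) x y p) \<le> B2 / wt p"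
    using Sc_Kbound[OF assms, of "[:1, 0, 1:]" "\<lambda>_. 1"] poly1 by (metis mult_1)
  obtain B3 where B3: "\<forall>x\<in>{0..1}. \<forall>y\<in>{0..1}. \<forall>p. \<bar>1\<bar> * norm (((pdx ^^ 0) ((pdy ^^ 1) \<Phi>)) x y p) \<le> B3 / wt p"
    using Sc_Kbound[OF assms, of "[:1, 0, 1:]" "\<lambda>_. 1"] poly1 by (metis mult_1)
  have b0: "norm (\<Phi> x y p) \<le> B0 / wt p" if "x \<in> {0..1}" "y \<in> {0..1}" for x y p
    using B0 that by simp
  have b1: "\<bar>real_of_int p\<bar> * norm (\<Phi> x y p) \<le> B1 / wt p" if "x \<in> {0..1}" "y \<in> {0..1}" for x y p
    using B1 that by simp
  have b2: "norm (pdx \<Phi> x y p) \<le> B2 / wt p" if "x \<in> {0..1}" "y \<in> {0..1}" for x y p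
    using B2 that by simp
  have b3: "norm (pdy \<Phi> x y p) \<le> B3 / wt p" if "x \<in> {0..1}" "y \<in> {0..1}" for x y p
    using B3 that by simp
  show "good \<Phi>" unfolding good_def using qp_bnd[OF qp_Sc[OF assms] b0] by blast
  show "good (delta1 \<Phi>)" unfolding good_def using qp_bnd[OF qp_d1[OF assms], of B2] b2
    by (auto simp: delta1_def)
  show "good (delta3 \<Phi>)" unfolding good_def
  proof (intro exI qp_bnd[OF qp_d3[OF assms]])
    fix x y p assume xy: "x \<in> {0..1::real}" "y \<in> {0..1::real}"
    have "norm (delta3 \<Phi> x y p) = 2 * pi * (\<bar>real_of_int p\<bar> * norm (\<Phi> x y p))"
      by (simp add: delta3_def norm_mult)
    also have "\<dots> \<le> 2 * pi * (B1 / wt p)" using b1[OF xy] by (intro mult_left_mono) auto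
    finally show "norm (delta3 \<Phi> x y p) \<le> (2 * pi * B1) / wt p" by simp
  qed
  show "good (delta2 c \<Phi>)" unfolding good_def
  proof (intro exI qp_bnd[OF qp_d2[OF assms]])
    fix x y p assume xy: "x \<in> {0..1::real}" "y \<in> {0..1::real}"
    have "norm (delta2 c \<Phi> x y p) \<le> norm (2 * of_real pi * \<i> * of_nat c * of_int p * of_real x * \<Phi> x y p)
          + norm (pdy \<Phi> x y p)"
      unfolding delta2_def by (rule norm_triangle_ineq4)
    also have "norm (2 * of_real pi * \<i> * of_nat c * of_int p * of_real x * \<Phi> x y p) =
        2 * pi * real c * \<bar>x\<bar> * (\<bar>real_of_int p\<bar> * norm (\<Phi> x y p))"
      by (simp add: norm_mult)
    also have "\<dots> \<le> 2 * pi * real c * 1 * (B1 / wt p)"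
      using b1[OF xy] xy by (intro mult_mono) auto
    also have "norm (pdy \<Phi> x y p) \<le> B3 / wt p" by (rule b3[OF xy])
    finally show "norm (delta2 c \<Phi> x y p) \<le> (2 * pi * real c * B1 + B3) / wt p"
      by (simp add: add_divide_distrib)
  qed
qed



lemma Sc_witness:
  assumes "\<Phi> \<in> Sc c"
  obtains D where "D 0 0 = (\<lambda>x y. \<Phi> x y p)"
    "\<forall>m n x y. ((\<lambda>t. D m n t y) has_vector_derivative D (Suc m) n x y) (at x) \<and>
                 ((\<lambda>t. D m n x t) has_vector_derivative D m (Suc n) x y) (at y)"
    "\<forall>m n. continuous_on UNIV (\<lambda>z. D m n (fst z) (snd z))"
  using ScD(1)[OF assms, of p] unfolding smooth_xy_def by blast

lemma iter_add:
  assumes a: "a \<in> Sc c" and b: "b \<in> Sc c"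
  shows "smooth_xy (\<lambda>x y. qadd a b x y p)"
    and "(pdx ^^ m) ((pdy ^^ n) (qadd a b)) x y p = (pdx ^^ m) ((pdy ^^ n) a) x y p + (pdx ^^ m) ((pdy ^^ n) b) x y p"
proof -
  obtain Da where Da0: "Da 0 0 = (\<lambda>x y. a x y p)" and
    Dad: "\<forall>m n x y. ((\<lambda>t. Da m n t y) has_vector_derivative Da (Suc m) n x y) (at x) \<and>
                 ((\<lambda>t. Da m n x t) has_vector_derivative Da m (Suc n) x y) (at y)" and
    Dac: "\<forall>m n. continuous_on UNIV (\<lambda>z. Da m n (fst z) (snd z))"
    using Sc_witness[OF a] by blast
  obtain Db where Db0: "Db 0 0 = (\<lambda>x y. b x y p)" and
    Dbd: "\<forall>m n x y. ((\<lambda>t. Db m n t y) has_vector_derivative Db (Suc m) n x y) (at x) \<and>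
                 ((\<lambda>t. Db m n x t) has_vector_derivative Db m (Suc n) x y) (at y)" and
    Dbc: "\<forall>m n. continuous_on UNIV (\<lambda>z. Db m n (fst z) (snd z))"
    using Sc_witness[OF b] by blast
  define D where "D = (\<lambda>m n x y. Da m n x y + Db m n x y)"
  have D0: "D 0 0 = (\<lambda>x y. qadd a b x y p)" using Da0 Db0 by (auto simp: D_def qadd_def fun_eq_iff)
  have Dd: "\<forall>m n x y. ((\<lambda>t. D m n t y) has_vector_derivative D (Suc m) n x y) (at x) \<and>
                 ((\<lambda>t. D m n x t) has_vector_derivative D m (Suc n) x y) (at y)"
  proof (intro allI conjI)
    fix m n x y
    have 1: "((\<lambda>t. Da m n t y) has_vector_derivative Da (Suc m) n x y) (at x)"
      "((\<lambda>t. Da m n x t) has_vector_derivative Da m (Suc n) x y) (at y)" using Dad by blast+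
    have 2: "((\<lambda>t. Db m n t y) has_vector_derivative Db (Suc m) n x y) (at x)"
      "((\<lambda>t. Db m n x t) has_vector_derivative Db m (Suc n) x y) (at y)" using Dbd by blast+
    show "((\<lambda>t. D m n t y) has_vector_derivative D (Suc m) n x y) (at x)"
      unfolding D_def by (rule has_vector_derivative_add[OF 1(1) 2(1)])
    show "((\<lambda>t. D m n x t) has_vector_derivative D m (Suc n) x y) (at y)"
      unfolding D_def by (rule has_vector_derivative_add[OF 1(2) 2(2)])
  qed
  have Dc: "\<forall>m n. continuous_on UNIV (\<lambda>z. D m n (fst z) (snd z))"
    unfolding D_def by (intro allI continuous_on_add) (use Dac Dbc in blast)+
  show "smooth_xy (\<lambda>x y. qadd a b x y p)" unfolding smooth_xy_def using D0 Dd Dc by blast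
  show "(pdx ^^ m) ((pdy ^^ n) (qadd a b)) x y p = (pdx ^^ m) ((pdy ^^ n) a) x y p + (pdx ^^ m) ((pdy ^^ n) b) x y p"
    using iter_pd[where \<Phi>="qadd a b" and p=p and D=D, OF D0 Dd]
      iter_pd[where \<Phi>=a and p=p and D=Da, OF Da0 Dad] iter_pd[where \<Phi>=b and p=p and D=Db, OF Db0 Dbd]
    by (simp add: D_def)
qed

lemma iter_scale:
  assumes a: "a \<in> Sc c"
  shows "smooth_xy (\<lambda>x y. qscale r a x y p)"
    and "(pdx ^^ m) ((pdy ^^ n) (qscale r a)) x y p = complex_of_real r * (pdx ^^ m) ((pdy ^^ n) a) x y p"
proof -
  obtain Da where Da0: "Da 0 0 = (\<lambda>x y. a x y p)" and
    Dad: "\<forall>m n x y. ((\<lambda>t. Da m n t y) has_vector_derivative Da (Suc m) n x y) (at x) \<and>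
                 ((\<lambda>t. Da m n x t) has_vector_derivative Da m (Suc n) x y) (at y)" and
    Dac: "\<forall>m n. continuous_on UNIV (\<lambda>z. Da m n (fst z) (snd z))"
    using Sc_witness[OF a] by blast
  define D where "D = (\<lambda>m n x y. complex_of_real r * Da m n x y)"
  have D0: "D 0 0 = (\<lambda>x y. qscale r a x y p)" using Da0 by (auto simp: D_def qscale_def fun_eq_iff)
  have Dd: "\<forall>m n x y. ((\<lambda>t. D m n t y) has_vector_derivative D (Suc m) n x y) (at x) \<and>
                 ((\<lambda>t. D m n x t) has_vector_derivative D m (Suc n) x y) (at y)"
  proof (intro allI conjI)
    fix m n x y
    have 1: "((\<lambda>t. Da m n t y) has_vector_derivative Da (Suc m) n x y) (at x)"
      "((\<lambda>t. Da m n x t) has_vector_derivative Da m (Suc n) x y) (at y)" using Dad by blast+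
    show "((\<lambda>t. D m n t y) has_vector_derivative D (Suc m) n x y) (at x)"
      unfolding D_def by (rule has_vector_derivative_mult_right[OF 1(1)])
    show "((\<lambda>t. D m n x t) has_vector_derivative D m (Suc n) x y) (at y)"
      unfolding D_def by (rule has_vector_derivative_mult_right[OF 1(2)])
  qed
  have Dc: "\<forall>m n. continuous_on UNIV (\<lambda>z. D m n (fst z) (snd z))"
    unfolding D_def by (intro allI continuous_on_mult continuous_on_const) (use Dac in blast)
  show "smooth_xy (\<lambda>x y. qscale r a x y p)" unfolding smooth_xy_def using D0 Dd Dc by blast
  show "(pdx ^^ m) ((pdy ^^ n) (qscale r a)) x y p = complex_of_real r * (pdx ^^ m) ((pdy ^^ n) a) x y p"
    using iter_pd[where \<Phi>="qscale r a" and p=p and D=D, OF D0 Dd]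
      iter_pd[where \<Phi>=a and p=p and D=Da, OF Da0 Dad]
    by (simp add: D_def)
qed

lemma iter_qI:
  shows "smooth_xy (\<lambda>x y. qI x y p)"
    and "(pdx ^^ m) ((pdy ^^ n) qI) x y p = (if m = 0 \<and> n = 0 then qI x y p else 0)"
proof -
  define D :: "nat \<Rightarrow> nat \<Rightarrow> real \<Rightarrow> real \<Rightarrow> complex" where "D = (\<lambda>m n (x::real) (y::real). if m = 0 \<and> n = 0 then qI x y p else 0)"
  have D0: "D 0 0 = (\<lambda>x y. qI x y p)" by (simp add: D_def)
  have Dd: "\<forall>m n x y. ((\<lambda>t. D m n t y) has_vector_derivative D (Suc m) n x y) (at x) \<and>
                 ((\<lambda>t. D m n x t) has_vector_derivative D m (Suc n) x y) (at y)"
  proof (intro allI)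
    fix m n x y
    show "((\<lambda>t. D m n t y) has_vector_derivative D (Suc m) n x y) (at x) \<and>
                 ((\<lambda>t. D m n x t) has_vector_derivative D m (Suc n) x y) (at y)"
    proof (cases "m = 0 \<and> n = 0")
      case True
      have e: "D m n = (\<lambda>x y. qI x y p)" "D (Suc m) n = (\<lambda>x y. 0)" "D m (Suc n) = (\<lambda>x y. 0)"
        using True by (auto simp: D_def fun_eq_iff)
      show ?thesis unfolding e by (simp add: qI_def)
    next
      case False
      have e: "D m n = (\<lambda>x y. 0)" "D (Suc m) n = (\<lambda>x y. 0)" "D m (Suc n) = (\<lambda>x y. 0)"
        using False by (auto simp: D_def fun_eq_iff)
      show ?thesis unfolding e by simp
    qed
  qed
  have Dc: "\<forall>m n. continuous_on UNIV (\<lambda>z. D m n (fst z) (snd z))"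
  proof (intro allI)
    fix m n
    have "(\<lambda>z. D m n (fst z) (snd z)) = (\<lambda>z. if m = 0 \<and> n = 0 \<and> p = 0 then 1 else 0)"
      by (auto simp: D_def qI_def fun_eq_iff)
    then show "continuous_on UNIV (\<lambda>z. D m n (fst z) (snd z))" by (metis continuous_on_const)
  qed
  show "smooth_xy (\<lambda>x y. qI x y p)" unfolding smooth_xy_def using D0 Dd Dc by blast
  show "(pdx ^^ m) ((pdy ^^ n) qI) x y p = (if m = 0 \<and> n = 0 then qI x y p else 0)"
    using iter_pd[where \<Phi>="qI" and p=p and D=D, OF D0 Dd] by (simp add: D_def)
qed

lemma Sc_add: assumes a: "a \<in> Sc c" and b: "b \<in> Sc c" shows "qadd a b \<in> Sc c"
proof -
  have 4: "\<exists>B. \<forall>x y p. (x, y) \<in> K \<longrightarrow>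
           norm (complex_of_real (poly P (of_int p)) * ((pdx ^^ m) ((pdy ^^ n) (qadd a b))) x y p) \<le> B"
    if K: "compact K" for P m n K
  proof -
    obtain B1 where B1: "\<forall>x y p. (x, y) \<in> K \<longrightarrow>
           norm (complex_of_real (poly P (of_int p)) * ((pdx ^^ m) ((pdy ^^ n) a)) x y p) \<le> B1"
      using ScD(4)[OF a K] by blast
    obtain B2 where B2: "\<forall>x y p. (x, y) \<in> K \<longrightarrow>
           norm (complex_of_real (poly P (of_int p)) * ((pdx ^^ m) ((pdy ^^ n) b)) x y p) \<le> B2"
      using ScD(4)[OF b K] by blast
    show ?thesis
    proof (intro exI allI impI)
      fix x y p assume xy: "(x, y) \<in> K"
      have "norm (complex_of_real (poly P (of_int p)) * ((pdx ^^ m) ((pdy ^^ n) (qadd a b))) x y p)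
          = norm (complex_of_real (poly P (of_int p)) * ((pdx ^^ m) ((pdy ^^ n) a)) x y p +
                  complex_of_real (poly P (of_int p)) * ((pdx ^^ m) ((pdy ^^ n) b)) x y p)"
        using iter_add(2)[OF a b] by (simp add: distrib_left)
      also have "\<dots> \<le> B1 + B2" using B1 B2 xy by (meson add_mono norm_triangle_le)
      finally show "norm (complex_of_real (poly P (of_int p)) * ((pdx ^^ m) ((pdy ^^ n) (qadd a b))) x y p) \<le> B1 + B2" .
    qed
  qed
  show ?thesis unfolding Sc_def
    using iter_add(1)[OF a b] ScD(2)[OF a] ScD(2)[OF b] ScD(3)[OF a] ScD(3)[OF b] 4
    by (simp add: qadd_def distrib_left)
qed

lemma Sc_scale: assumes a: "a \<in> Sc c" shows "qscale r a \<in> Sc c"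
proof -
  have 4: "\<exists>B. \<forall>x y p. (x, y) \<in> K \<longrightarrow>
           norm (complex_of_real (poly P (of_int p)) * ((pdx ^^ m) ((pdy ^^ n) (qscale r a))) x y p) \<le> B"
    if K: "compact K" for P m n K
  proof -
    obtain B1 where B1: "\<forall>x y p. (x, y) \<in> K \<longrightarrow>
           norm (complex_of_real (poly P (of_int p)) * ((pdx ^^ m) ((pdy ^^ n) a)) x y p) \<le> B1"
      using ScD(4)[OF a K] by blast
    show ?thesis
    proof (intro exI allI impI)
      fix x y p assume xy: "(x, y) \<in> K"
      have "norm (complex_of_real (poly P (of_int p)) * ((pdx ^^ m) ((pdy ^^ n) (qscale r a))) x y p)
          = \<bar>r\<bar> * norm (complex_of_real (poly P (of_int p)) * ((pdx ^^ m) ((pdy ^^ n) a)) x y p)"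
        using iter_scale(2)[OF a] by (simp add: norm_mult)
      also have "\<dots> \<le> \<bar>r\<bar> * B1" using B1 xy by (intro mult_left_mono) auto
      finally show "norm (complex_of_real (poly P (of_int p)) * ((pdx ^^ m) ((pdy ^^ n) (qscale r a))) x y p) \<le> \<bar>r\<bar> * B1" .
    qed
  qed
  show ?thesis unfolding Sc_def
    using iter_scale(1)[OF a] ScD(2)[OF a] ScD(3)[OF a] 4
    by (simp add: qscale_def)
qed

lemma qI_Sc: "qI \<in> Sc c"
proof -
  have 4: "\<exists>B. \<forall>x y p. (x, y) \<in> K \<longrightarrow>
           norm (complex_of_real (poly P (of_int p)) * ((pdx ^^ m) ((pdy ^^ n) qI)) x y p) \<le> B"
    for P m n K
  proof (intro exI allI impI)
    fix x y p
    show "norm (complex_of_real (poly P (of_int p)) * ((pdx ^^ m) ((pdy ^^ n) qI)) x y p) \<le> \<bar>poly P 0\<bar>"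
      using iter_qI(2)[of m n x y p] by (auto simp: qI_def)
  qed
  show ?thesis unfolding Sc_def using iter_qI(1) 4 by (auto simp: qI_def ee_def)
qed

lemma pdx_add: "a \<in> Sc c \<Longrightarrow> b \<in> Sc c \<Longrightarrow> pdx (qadd a b) = qadd (pdx a) (pdx b)"
  using iter_add(2)[where a=a and c=c and b=b and m=1 and n=0] by (auto simp: fun_eq_iff qadd_def)
lemma pdy_add: "a \<in> Sc c \<Longrightarrow> b \<in> Sc c \<Longrightarrow> pdy (qadd a b) = qadd (pdy a) (pdy b)"
  using iter_add(2)[where a=a and c=c and b=b and m=0 and n=1] by (auto simp: fun_eq_iff qadd_def)
lemma pdx_scale: "a \<in> Sc c \<Longrightarrow> pdx (qscale r a) = qscale r (pdx a)"
  using iter_scale(2)[where a=a and c=c and r=r and m=1 and n=0] by (auto simp: fun_eq_iff qscale_def)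
lemma pdy_scale: "a \<in> Sc c \<Longrightarrow> pdy (qscale r a) = qscale r (pdy a)"
  using iter_scale(2)[where a=a and c=c and r=r and m=0 and n=1] by (auto simp: fun_eq_iff qscale_def)
lemma pdx_qI: "pdx qI = (\<lambda>x y p. 0)"
  using iter_qI(2)[where m=1 and n=0] by (auto simp: fun_eq_iff)
lemma pdy_qI: "pdy qI = (\<lambda>x y p. 0)"
  using iter_qI(2)[where m=0 and n=1] by (auto simp: fun_eq_iff)

lemma delta_add:
  assumes "a \<in> Sc c" "b \<in> Sc c"
  shows "delta1 (qadd a b) = qadd (delta1 a) (delta1 b)"
    "delta2 c (qadd a b) = qadd (delta2 c a) (delta2 c b)"
    "delta3 (qadd a b) = qadd (delta3 a) (delta3 b)"
  using pdx_add[OF assms] pdy_add[OF assms]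
  by (auto simp: delta1_def delta2_def delta3_def qadd_def fun_eq_iff algebra_simps)

lemma delta_scale:
  assumes "a \<in> Sc c"
  shows "delta1 (qscale r a) = qscale r (delta1 a)"
    "delta2 c (qscale r a) = qscale r (delta2 c a)"
    "delta3 (qscale r a) = qscale r (delta3 a)"
  using pdx_scale[OF assms] pdy_scale[OF assms]
  by (auto simp: delta1_def delta2_def delta3_def qscale_def fun_eq_iff algebra_simps)

lemma delta_qI:
  shows "delta1 qI = (\<lambda>x y p. 0)" "delta2 c qI = (\<lambda>x y p. 0)" "delta3 qI = (\<lambda>x y p. 0)"
  using pdx_qI pdy_qI by (auto simp: delta1_def delta2_def delta3_def qI_def fun_eq_iff)

lemma Asa_Sc: "a \<in> Asa c \<Longrightarrow> a \<in> Sc c" by (simp add: Asa_def)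
lemma Asa_star: "a \<in> Asa c \<Longrightarrow> qstar a = a" by (simp add: Asa_def)

lemma Asa_add: "a \<in> Asa c \<Longrightarrow> b \<in> Asa c \<Longrightarrow> qadd a b \<in> Asa c"
  unfolding Asa_def using Sc_add by (auto simp: qstar_def qadd_def fun_eq_iff)
lemma Asa_scale: "a \<in> Asa c \<Longrightarrow> qscale r a \<in> Asa c"
  unfolding Asa_def using Sc_scale by (auto simp: qstar_def qscale_def fun_eq_iff)
lemma qI_Asa: "qI \<in> Asa c"
  unfolding Asa_def using qI_Sc by (auto simp: qstar_def qI_def fun_eq_iff)



lemma max_mult_nonneg: "0 \<le> (k::real) \<Longrightarrow> max (k * x) (k * y) = k * max x y"
  using max_mult_distrib_left[of k x y] by simp

lemma Lip_nonneg: "a \<in> Sc c \<Longrightarrow> 0 \<le> Lip c a"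
  unfolding Lip_def using norm_ii1_nonneg[OF Sc_good(2)] by (simp add: le_max_iff_disj)

lemma Lip_ge:
  assumes "a \<in> Sc c"
  shows "norm_ii1 (delta1 a) \<le> Lip c a" "norm_ii1 (delta2 c a) \<le> Lip c a" "norm_ii1 (delta3 a) \<le> Lip c a"
  unfolding Lip_def by auto

lemma Lip_pt:
  assumes "a \<in> Sc c"
  shows "norm (delta1 a x y p) \<le> Lip c a" "norm (delta2 c a x y p) \<le> Lip c a" "norm (delta3 a x y p) \<le> Lip c a"
  using pt_le_norm_ii1[OF Sc_good(2)[OF assms]] pt_le_norm_ii1[OF Sc_good(3)[OF assms]]
    pt_le_norm_ii1[OF Sc_good(4)[OF assms]] Lip_ge[OF assms] order_trans by blast+

lemma Lip_add:
  assumes a: "a \<in> Sc c" and b: "b \<in> Sc c"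
  shows "Lip c (qadd a b) \<le> Lip c a + Lip c b"
proof -
  have 1: "norm_ii1 (delta1 (qadd a b)) \<le> Lip c a + Lip c b"
    unfolding delta_add[OF a b]
    using norm_ii1_add[OF Sc_good(2)[OF a] Sc_good(2)[OF b]] Lip_ge(1)[OF a] Lip_ge(1)[OF b] by linarith
  have 2: "norm_ii1 (delta2 c (qadd a b)) \<le> Lip c a + Lip c b"
    unfolding delta_add[OF a b]
    using norm_ii1_add[OF Sc_good(3)[OF a] Sc_good(3)[OF b]] Lip_ge(2)[OF a] Lip_ge(2)[OF b] by linarith
  have 3: "norm_ii1 (delta3 (qadd a b)) \<le> Lip c a + Lip c b"
    unfolding delta_add[OF a b]
    using norm_ii1_add[OF Sc_good(4)[OF a] Sc_good(4)[OF b]] Lip_ge(3)[OF a] Lip_ge(3)[OF b] by linarith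
  show ?thesis using 1 2 3 unfolding Lip_def[of c "qadd a b"] by simp
qed

lemma Lip_scale:
  assumes a: "a \<in> Sc c"
  shows "Lip c (qscale r a) = \<bar>r\<bar> * Lip c a"
  unfolding Lip_def delta_scale[OF a]
    norm_ii1_scale[OF Sc_good(2)[OF a]] norm_ii1_scale[OF Sc_good(3)[OF a]] norm_ii1_scale[OF Sc_good(4)[OF a]]
  by (simp add: max_mult_nonneg)

lemma norm_ii1_zero: "norm_ii1 (\<lambda>x y p. 0) = 0"
  unfolding norm_ii1_def by simp

lemma Lip_qI: "Lip c (qscale r qI) = 0"
proof -
  have "Lip c (qscale r qI) = \<bar>r\<bar> * Lip c qI" by (rule Lip_scale[OF qI_Sc])
  moreover have "Lip c qI = 0" unfolding Lip_def delta_qI norm_ii1_zero by simp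
  ultimately show ?thesis by simp
qed

lemma infsum_zero_pt:
  fixes f :: "int \<Rightarrow> real"
  assumes "f summable_on UNIV" "\<And>q. 0 \<le> f q" "infsum f UNIV = 0"
  shows "f p = 0"
  using le_infsum_pt[OF assms(1,2), of p] assms(2,3) by (metis order_antisym)

lemma norm_ii1_zero_pt:
  assumes "good g" "norm_ii1 g = 0" shows "g x y p = 0"
proof -
  have "sp g p = 0" using infsum_zero_pt[of "sp g"] good_sp[OF assms(1)] assms(2) unfolding norm_ii1_sp by blast
  then show ?thesis using good_sp(1)[OF assms(1), of x y p] by simp
qed

lemma const_of_deriv0:
  fixes f :: "real \<Rightarrow> complex"
  assumes "\<And>t. (f has_vector_derivative 0) (at t)"
  shows "f x = f y"
proof -
  have "norm (f x - f y) \<le> 0 * \<bar>x - y\<bar>"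
    by (rule mvt_cplx[where a="min x y" and b="max x y" and f'="\<lambda>_. 0"]) (use assms in auto)
  then show ?thesis by simp
qed

lemma pdy_identity: "pdy b x y p = of_nat c * of_real x * delta3 b x y p - delta2 c b x y p"
  by (simp add: delta2_def delta3_def algebra_simps)

lemma Lip_zero_iff:
  assumes a: "a \<in> Asa c"
  shows "Lip c a = 0 \<longleftrightarrow> (\<exists>r. a = qscale r qI)"
proof
  assume "\<exists>r. a = qscale r qI" then show "Lip c a = 0" using Lip_qI by auto
next
  assume L: "Lip c a = 0"
  have aS: "a \<in> Sc c" using a by (simp add: Asa_def)
  have n1: "norm_ii1 (delta1 a) = 0" and n2: "norm_ii1 (delta2 c a) = 0" and n3: "norm_ii1 (delta3 a) = 0"
    using Lip_ge[OF aS] L norm_ii1_nonneg[OF Sc_good(2)[OF aS]] norm_ii1_nonneg[OF Sc_good(3)[OF aS]]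
      norm_ii1_nonneg[OF Sc_good(4)[OF aS]] by linarith+
  have z1: "pdx a x y p = 0" for x y p
    using norm_ii1_zero_pt[OF Sc_good(2)[OF aS] n1, of x y p] by (simp add: delta1_def)
  have z3: "p \<noteq> 0 \<Longrightarrow> a x y p = 0" for x y p
    using norm_ii1_zero_pt[OF Sc_good(4)[OF aS] n3, of x y p] by (simp add: delta3_def)
  have z2: "pdy a x y 0 = 0" for x y
    using norm_ii1_zero_pt[OF Sc_good(3)[OF aS] n2, of x y 0] by (simp add: delta2_def)
  have cx: "a x y 0 = a 0 y 0" for x y
    using Sc_dx[OF aS, of y 0] z1 by (intro const_of_deriv0[where f="\<lambda>t. a t y 0"]) auto
  have cy: "a 0 y 0 = a 0 0 0" for y
    using Sc_dy[OF aS, of 0 0] z2 by (intro const_of_deriv0[where f="\<lambda>t. a 0 t 0"]) auto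
  have st: "qstar a = a" using a by (simp add: Asa_def)
  have cj: "cnj (a 0 0 0) = a 0 0 0" using fun_cong[OF fun_cong[OF fun_cong[OF st, of 0], of 0], of 0]
    by (simp add: qstar_def)
  have "Im (a 0 0 0) = 0" using arg_cong[OF cj, of Im] by simp
  then have re: "a 0 0 0 = complex_of_real (Re (a 0 0 0))" by (simp add: complex_eq_iff)
  have "a = qscale (Re (a 0 0 0)) qI"
  proof (intro ext)
    fix x y p
    show "a x y p = qscale (Re (a 0 0 0)) qI x y p"
    proof (cases "p = 0")
      case True
      have "a x y p = a 0 0 0" unfolding True by (rule trans[OF cx cy])
      also have "\<dots> = complex_of_real (Re (a 0 0 0))" by (rule re)
      finally show ?thesis using True by (simp add: qscale_def qI_def)
    next
      case False then show ?thesis using z3 by (simp add: qscale_def qI_def)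
    qed
  qed
  then show "\<exists>r. a = qscale r qI" by blast
qed

lemma Lip_square:
  assumes b: "b \<in> Sc c" and xs: "x \<in> {0..1}" "x' \<in> {0..1}" and ys: "y \<in> {0..1}" "y' \<in> {0..1}"
  shows "norm (b x y p - b x' y' p) \<le> Lip c b * \<bar>x - x'\<bar> + (real c + 1) * Lip c b * \<bar>y - y'\<bar>"
proof -
  have 1: "norm (b x y p - b x' y p) \<le> Lip c b * \<bar>x - x'\<bar>"
  proof (rule mvt_cplx[where f="\<lambda>t. b t y p" and f'="\<lambda>t. pdx b t y p" and a=0 and b=1])
    show "((\<lambda>t. b t y p) has_vector_derivative pdx b t y p) (at t)" for t by (rule Sc_dx[OF b])
    show "norm (pdx b t y p) \<le> Lip c b" for t using Lip_pt(1)[OF b, of t y p] by (simp add: delta1_def)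
  qed (use xs in auto)
  have 2: "norm (b x' y p - b x' y' p) \<le> (real c + 1) * Lip c b * \<bar>y - y'\<bar>"
  proof (rule mvt_cplx[where f="\<lambda>t. b x' t p" and f'="\<lambda>t. pdy b x' t p" and a=0 and b=1])
    show "((\<lambda>t. b x' t p) has_vector_derivative pdy b x' t p) (at t)" for t by (rule Sc_dy[OF b])
    fix t
    have "norm (pdy b x' t p) \<le> norm (of_nat c * of_real x' * delta3 b x' t p) + norm (delta2 c b x' t p)"
      unfolding pdy_identity[of b x' t p c] by (rule norm_triangle_ineq4)
    also have "norm (of_nat c * of_real x' * delta3 b x' t p) = real c * \<bar>x'\<bar> * norm (delta3 b x' t p)"
      by (simp add: norm_mult)
    also have "\<dots> \<le> real c * 1 * Lip c b"
      using xs Lip_pt(3)[OF b, of x' t p] by (intro mult_mono) auto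
    also have "norm (delta2 c b x' t p) \<le> Lip c b" by (rule Lip_pt(2)[OF b])
    finally show "norm (pdy b x' t p) \<le> (real c + 1) * Lip c b" by (simp add: algebra_simps)
  qed (use ys in auto)
  have "b x y p - b x' y' p = (b x y p - b x' y p) + (b x' y p - b x' y' p)" by simp
  then have "norm (b x y p - b x' y' p) \<le> norm (b x y p - b x' y p) + norm (b x' y p - b x' y' p)"
    by (metis norm_triangle_ineq)
  then show ?thesis using 1 2 by linarith
qed



abbreviation CS :: "int measure" where "CS \<equiv> count_space UNIV"
abbreviation MM :: "(real \<times> real) measure" where "MM \<equiv> lborel \<Otimes>\<^sub>M restrict_space lborel {0..1::real}"

lemma sf_C: "sigma_finite_measure CS"
  by (rule sigma_finite_measure_count_space_countable) simp

lemma sf_R: "sigma_finite_measure (restrict_space lborel {0..1::real})"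
  by (rule sigma_finite_measure_restrict_space) (auto simp: lborel.sigma_finite_measure_axioms)

lemma sf_M: "sigma_finite_measure MM"
proof -
  interpret R: sigma_finite_measure "restrict_space lborel {0..1::real}" by (rule sf_R)
  interpret PS: pair_sigma_finite lborel "restrict_space lborel {0..1::real}" ..
  show ?thesis by (rule PS.sigma_finite_measure_axioms)
qed

lemma sf_H: "sigma_finite_measure hmeas"
proof -
  interpret M: sigma_finite_measure MM by (rule sf_M)
  interpret C: sigma_finite_measure CS by (rule sf_C)
  interpret PS: pair_sigma_finite MM CS ..
  show ?thesis unfolding hmeas_def by (rule PS.sigma_finite_measure_axioms)
qed

lemma nn_count_infsum:
  fixes f :: "int \<Rightarrow> real"
  assumes "f summable_on UNIV" "\<And>q. 0 \<le> f q"
  shows "(\<integral>\<^sup>+q. ennreal (f q) \<partial>CS) = ennreal (infsum f UNIV)"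
proof -
  have "(\<lambda>q. norm (f q)) summable_on UNIV" using assms by simp
  then have abs: "Infinite_Set_Sum.abs_summable_on f UNIV"
    using abs_summable_equivalent[of f UNIV] by blast
  then have int: "integrable CS f" by (simp add: abs_summable_on_def)
  have "infsetsum f UNIV = infsum f UNIV" by (rule infsetsum_infsum[OF abs])
  then have "integral\<^sup>L CS f = infsum f UNIV" by (simp add: infsetsum_def)
  moreover have "(\<integral>\<^sup>+q. ennreal (f q) \<partial>CS) = ennreal (integral\<^sup>L CS f)"
    by (rule nn_integral_eq_integral[OF int]) (use assms in auto)
  ultimately show ?thesis by simp
qed

lemma meas_minus: "(\<lambda>w. snd (fst w) - snd w) \<in> measurable (hmeas \<Otimes>\<^sub>M CS) CS"
proof -
  have 1: "(\<lambda>w. (snd (fst w), snd w)) \<in> measurable (hmeas \<Otimes>\<^sub>M CS) (CS \<Otimes>\<^sub>M CS)"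
    unfolding hmeas_def by measurable
  have 2: "(\<lambda>(a::int, b). a - b) \<in> measurable (CS \<Otimes>\<^sub>M CS) CS"
    by (simp add: pair_measure_countable)
  show ?thesis using measurable_compose[OF 1 2] by simp
qed

lemma meas_shiftmap: "(\<lambda>w. (fst (fst w), snd (fst w) - snd w)) \<in> measurable (hmeas \<Otimes>\<^sub>M CS) hmeas"
proof -
  have 1: "(\<lambda>w. fst (fst w)) \<in> measurable (hmeas \<Otimes>\<^sub>M CS) MM"
    unfolding hmeas_def by measurable
  show ?thesis unfolding hmeas_def[symmetric]
    using measurable_Pair[OF 1 meas_minus] unfolding hmeas_def by simp
qed

lemma meas_shift1: "(\<lambda>z. (fst z, snd z - q)) \<in> measurable hmeas hmeas"
proof -
  have 1: "(\<lambda>z::(real\<times>real)\<times>int. snd z - q) \<in> measurable hmeas CS"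
    unfolding hmeas_def by (rule measurable_compose[OF measurable_snd]) simp
  have 0: "(\<lambda>z::(real\<times>real)\<times>int. fst z) \<in> measurable hmeas MM" unfolding hmeas_def by simp
  show ?thesis using measurable_Pair[OF 0 1] unfolding hmeas_def by simp
qed

lemma shift_integral:
  assumes g: "g \<in> borel_measurable hmeas"
  shows "(\<integral>\<^sup>+z. g (fst z, snd z - q) \<partial>hmeas) = (\<integral>\<^sup>+z. g z \<partial>hmeas)"
proof -
  interpret C: sigma_finite_measure CS by (rule sf_C)
  have gs: "(\<lambda>z. g (fst z, snd z - q)) \<in> borel_measurable hmeas"
    by (rule measurable_compose[OF meas_shift1 g])
  have "(\<integral>\<^sup>+z. g (fst z, snd z - q) \<partial>hmeas) = (\<integral>\<^sup>+m. \<integral>\<^sup>+p. g (m, p - q) \<partial>CS \<partial>MM)"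
    using C.nn_integral_fst[of "\<lambda>z. g (fst z, snd z - q)" MM] gs unfolding hmeas_def by simp
  also have "\<dots> = (\<integral>\<^sup>+m. \<integral>\<^sup>+p. g (m, p) \<partial>CS \<partial>MM)"
  proof (rule nn_integral_cong)
    fix m
    have b: "bij_betw (\<lambda>p::int. p - q) UNIV UNIV"
      by (rule bij_betwI[where g="\<lambda>p. p + q"]) auto
    show "(\<integral>\<^sup>+p. g (m, p - q) \<partial>CS) = (\<integral>\<^sup>+p. g (m, p) \<partial>CS)"
      by (rule nn_integral_bij_count_space[OF b])
  qed
  also have "\<dots> = (\<integral>\<^sup>+z. g z \<partial>hmeas)"
    using C.nn_integral_fst[of g MM] g unfolding hmeas_def by simp
  finally show ?thesis .
qed

lemma piop_pt:
  assumes g: "good \<Phi>"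
  shows "ennreal (norm (piop h mu nu \<Phi> \<xi> z)) \<le> (\<integral>\<^sup>+q. ennreal (sp \<Phi> q * norm (\<xi> (fst z, snd z - q))) \<partial>CS)"
proof -
  obtain x y p where z: "z = ((x, y), p)" by (metis prod.collapse)
  define f where "f q = \<Phi> (x - h * of_int (q - 2 * p) * mu) (y - h * of_int (q - 2 * p) * nu) q * \<xi> ((x, y), p - q)" for q
  have pz: "piop h mu nu \<Phi> \<xi> z = infsum f UNIV" unfolding z piop_def f_def by simp
  have nf: "norm (f q) \<le> sp \<Phi> q * norm (\<xi> (fst z, snd z - q))" for q
    unfolding f_def z using good_sp(1)[OF g] by (auto simp: norm_mult intro: mult_right_mono)
  show ?thesis
  proof (cases "f summable_on UNIV")
    case True
    then have ns: "(\<lambda>q. norm (f q)) summable_on UNIV" using summable_on_iff_abs_summable_on_complex by blast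
    have "norm (infsum f UNIV) \<le> infsum (\<lambda>q. norm (f q)) UNIV"
      by (rule norm_infsum_le[OF has_sum_infsum[OF True] has_sum_infsum[OF ns]]) simp
    then have "ennreal (norm (infsum f UNIV)) \<le> ennreal (infsum (\<lambda>q. norm (f q)) UNIV)" by (rule ennreal_leI)
    also have "\<dots> = (\<integral>\<^sup>+q. ennreal (norm (f q)) \<partial>CS)" by (rule nn_count_infsum[OF ns, symmetric]) simp
    also have "\<dots> \<le> (\<integral>\<^sup>+q. ennreal (sp \<Phi> q * norm (\<xi> (fst z, snd z - q))) \<partial>CS)"
      by (intro nn_integral_mono ennreal_leI nf)
    finally show ?thesis unfolding pz .
  next
    case False
    then show ?thesis unfolding pz infsum_not_exists[OF False] by simp
  qed
qed

lemma cs_count: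
  fixes s u :: "int \<Rightarrow> real"
  assumes "\<And>q. 0 \<le> s q" "\<And>q. 0 \<le> u q"
  shows "(\<integral>\<^sup>+q. ennreal (s q * u q) \<partial>CS)\<^sup>2 \<le> (\<integral>\<^sup>+q. ennreal (s q) \<partial>CS) * (\<integral>\<^sup>+q. ennreal (s q * (u q)\<^sup>2) \<partial>CS)"
proof -
  have "(\<integral>\<^sup>+q. ennreal (sqrt (s q)) * ennreal (sqrt (s q) * u q) \<partial>CS)\<^sup>2 \<le>
     (\<integral>\<^sup>+q. ennreal (sqrt (s q)) ^ 2 \<partial>CS) * (\<integral>\<^sup>+q. ennreal (sqrt (s q) * u q) ^ 2 \<partial>CS)"
    by (rule Cauchy_Schwarz_nn_integral) simp_all
  moreover have "ennreal (sqrt (s q)) * ennreal (sqrt (s q) * u q) = ennreal (s q * u q)" for q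
    using assms[of q] by (simp add: ennreal_mult[symmetric] mult.assoc[symmetric])
  moreover have "ennreal (sqrt (s q)) ^ 2 = ennreal (s q)" for q
    using assms[of q] by (simp add: ennreal_power)
  moreover have "ennreal (sqrt (s q) * u q) ^ 2 = ennreal (s q * (u q)\<^sup>2)" for q
    using assms[of q] by (simp add: ennreal_power power_mult_distrib)
  ultimately show ?thesis by simp
qed

lemma L2_bound:
  assumes g: "good \<Phi>" and xi: "inL2 \<xi>"
  shows "l2norm (piop h mu nu \<Phi> \<xi>) \<le> norm_ii1 \<Phi> * l2norm \<xi>"
proof -
  interpret H: sigma_finite_measure hmeas by (rule sf_H)
  interpret C: sigma_finite_measure CS by (rule sf_C)
  interpret HC: pair_sigma_finite hmeas CS ..
  define s where "s = sp \<Phi>"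
  define S where "S = norm_ii1 \<Phi>"
  have s0: "0 \<le> s q" for q unfolding s_def using good_sp(2)[OF g] .
  have ssum: "s summable_on UNIV" unfolding s_def using good_sp(3)[OF g] .
  have S0: "0 \<le> S" unfolding S_def using norm_ii1_nonneg[OF g] .
  have intS: "(\<integral>\<^sup>+q. ennreal (s q) \<partial>CS) = ennreal S"
    unfolding S_def norm_ii1_sp s_def[symmetric] by (rule nn_count_infsum[OF ssum s0])
  have xm[measurable]: "\<xi> \<in> borel_measurable hmeas" using xi by (simp add: inL2_def)
  have Lfin: "l2sq \<xi> < \<infinity>" using xi by (simp add: inL2_def)
  define L where "L = l2sq \<xi>"
  have m1[measurable]: "(\<lambda>w. \<xi> (fst (fst w), snd (fst w) - snd w)) \<in> borel_measurable (hmeas \<Otimes>\<^sub>M CS)"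
    by (rule measurable_compose[OF meas_shiftmap xm])
  have m2[measurable]: "(\<lambda>w. s (snd w)) \<in> borel_measurable (hmeas \<Otimes>\<^sub>M CS)"
    by (rule measurable_compose[OF measurable_snd]) simp
  have pw: "ennreal ((norm (piop h mu nu \<Phi> \<xi> z))\<^sup>2) \<le>
      (\<integral>\<^sup>+q. ennreal S * ennreal (s q * (norm (\<xi> (fst z, snd z - q)))\<^sup>2) \<partial>CS)" for z
  proof -
    have "ennreal ((norm (piop h mu nu \<Phi> \<xi> z))\<^sup>2) = (ennreal (norm (piop h mu nu \<Phi> \<xi> z)))\<^sup>2"
      by (simp add: ennreal_power)
    also have "\<dots> \<le> (\<integral>\<^sup>+q. ennreal (s q * norm (\<xi> (fst z, snd z - q))) \<partial>CS)\<^sup>2"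
      using piop_pt[OF g, of h mu nu \<xi> z] unfolding s_def by (intro power_mono) auto
    also have "\<dots> \<le> (\<integral>\<^sup>+q. ennreal (s q) \<partial>CS) * (\<integral>\<^sup>+q. ennreal (s q * (norm (\<xi> (fst z, snd z - q)))\<^sup>2) \<partial>CS)"
      by (rule cs_count[OF s0]) simp
    also have "\<dots> = (\<integral>\<^sup>+q. ennreal S * ennreal (s q * (norm (\<xi> (fst z, snd z - q)))\<^sup>2) \<partial>CS)"
      unfolding intS by (rule nn_integral_cmult[symmetric]) simp
    finally show ?thesis .
  qed
  have "l2sq (piop h mu nu \<Phi> \<xi>) \<le> (\<integral>\<^sup>+z. \<integral>\<^sup>+q. ennreal S * ennreal (s q * (norm (\<xi> (fst z, snd z - q)))\<^sup>2) \<partial>CS \<partial>hmeas)"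
    unfolding l2sq_def by (intro nn_integral_mono pw)
  also have "\<dots> = (\<integral>\<^sup>+q. \<integral>\<^sup>+z. ennreal S * ennreal (s q * (norm (\<xi> (fst z, snd z - q)))\<^sup>2) \<partial>hmeas \<partial>CS)"
    by (rule HC.Fubini'[symmetric]) measurable
  also have "\<dots> = (\<integral>\<^sup>+q. ennreal S * ennreal (s q) * L \<partial>CS)"
  proof (rule nn_integral_cong)
    fix q
    have "(\<integral>\<^sup>+z. ennreal S * ennreal (s q * (norm (\<xi> (fst z, snd z - q)))\<^sup>2) \<partial>hmeas)
        = (\<integral>\<^sup>+z. (ennreal S * ennreal (s q)) * ennreal ((norm (\<xi> (fst z, snd z - q)))\<^sup>2) \<partial>hmeas)"
      using s0[of q] by (simp add: ennreal_mult mult.assoc)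
    also have "\<dots> = (ennreal S * ennreal (s q)) * (\<integral>\<^sup>+z. ennreal ((norm (\<xi> (fst z, snd z - q)))\<^sup>2) \<partial>hmeas)"
      by (rule nn_integral_cmult) (rule measurable_compose[OF meas_shift1], measurable)
    also have "(\<integral>\<^sup>+z. ennreal ((norm (\<xi> (fst z, snd z - q)))\<^sup>2) \<partial>hmeas) = L"
      unfolding L_def l2sq_def
      by (rule shift_integral[where g="\<lambda>z. ennreal ((norm (\<xi> z))\<^sup>2)"]) measurable
    finally show "(\<integral>\<^sup>+z. ennreal S * ennreal (s q * (norm (\<xi> (fst z, snd z - q)))\<^sup>2) \<partial>hmeas) =
       ennreal S * ennreal (s q) * L" .
  qed
  also have "\<dots> = ennreal S * L * (\<integral>\<^sup>+q. ennreal (s q) \<partial>CS)"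
    by (subst nn_integral_cmult[symmetric]) (simp_all add: ac_simps)
  also have "\<dots> = ennreal (S * S) * L" unfolding intS using S0 by (simp add: ennreal_mult ac_simps)
  finally have le: "l2sq (piop h mu nu \<Phi> \<xi>) \<le> ennreal (S * S) * L" .
  have fin: "ennreal (S * S) * L < top" using Lfin unfolding L_def by (simp add: ennreal_mult_less_top)
  have "enn2real (l2sq (piop h mu nu \<Phi> \<xi>)) \<le> enn2real (ennreal (S * S) * L)"
    by (rule enn2real_mono[OF le fin])
  also have "\<dots> = S * S * enn2real L" using S0 by (simp add: enn2real_mult)
  finally have "sqrt (enn2real (l2sq (piop h mu nu \<Phi> \<xi>))) \<le> sqrt (S * S * enn2real L)"
    by (rule real_sqrt_le_mono)
  also have "\<dots> = S * sqrt (enn2real L)" using S0 by (simp add: real_sqrt_mult)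
  finally show ?thesis unfolding l2norm_def S_def L_def .
qed

lemma fin_supp:
  fixes F :: "int set"
  assumes "finite F"
  shows "(\<lambda>p. if p \<in> F then K else (0::real)) summable_on UNIV"
    "infsum (\<lambda>p. if p \<in> F then K else (0::real)) UNIV = K * real (card F)"
proof -
  have "(\<lambda>p. if p \<in> F then K else (0::real)) summable_on F" using assms by simp
  then show "(\<lambda>p. if p \<in> F then K else (0::real)) summable_on UNIV"
    using summable_on_cong_neutral[of UNIV F "\<lambda>p. if p \<in> F then K else (0::real)" "\<lambda>p. if p \<in> F then K else (0::real)"]
    by auto
  have "infsum (\<lambda>p. if p \<in> F then K else (0::real)) UNIV = infsum (\<lambda>p. if p \<in> F then K else (0::real)) F"
    by (rule infsum_cong_neutral) auto
  also have "\<dots> = K * real (card F)" using assms by simp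
  finally show "infsum (\<lambda>p. if p \<in> F then K else (0::real)) UNIV = K * real (card F)" .
qed

lemma cnorm_bounds:
  assumes g: "good \<Phi>"
  shows "0 \<le> cnorm h mu nu \<Phi>" "cnorm h mu nu \<Phi> \<le> norm_ii1 \<Phi>"
proof -
  define X where "X = {l2norm (piop h mu nu \<Phi> \<xi>) | \<xi>. inL2 \<xi> \<and> l2norm \<xi> \<le> 1}"
  have z: "inL2 (\<lambda>_. 0)" by (simp add: inL2_def l2sq_def)
  have lz: "l2norm (\<lambda>_. 0) = 0" by (simp add: l2norm_def l2sq_def)
  have mem: "l2norm (piop h mu nu \<Phi> (\<lambda>_. 0)) \<in> X" unfolding X_def using z lz by force
  have ub: "v \<le> norm_ii1 \<Phi>" if "v \<in> X" for v
  proof -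
    obtain \<xi> where v: "v = l2norm (piop h mu nu \<Phi> \<xi>)" and xi: "inL2 \<xi>" "l2norm \<xi> \<le> 1"
      using \<open>v \<in> X\<close> unfolding X_def by blast
    have "v \<le> norm_ii1 \<Phi> * l2norm \<xi>" unfolding v by (rule L2_bound[OF g xi(1)])
    also have "\<dots> \<le> norm_ii1 \<Phi> * 1" using xi(2) norm_ii1_nonneg[OF g] by (intro mult_left_mono) auto
    finally show ?thesis by simp
  qed
  have c: "cnorm h mu nu \<Phi> = Sup X" unfolding cnorm_def X_def ..
  show "cnorm h mu nu \<Phi> \<le> norm_ii1 \<Phi>" unfolding c using mem ub by (intro cSup_least) auto
  have "0 \<le> l2norm (piop h mu nu \<Phi> (\<lambda>_. 0))" by (simp add: l2norm_def)
  also have "\<dots> \<le> Sup X" using mem ub by (intro cSup_upper) (auto simp: bdd_above_def)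
  finally show "0 \<le> cnorm h mu nu \<Phi>" unfolding c .
qed

lemma stateD:
  assumes "\<omega> \<in> states c h mu nu"
  shows "\<omega> \<in> extensional (Asa c)"
    "a \<in> Asa c \<Longrightarrow> b \<in> Asa c \<Longrightarrow> \<omega> (qadd a b) = \<omega> a + \<omega> b"
    "a \<in> Asa c \<Longrightarrow> \<omega> (qscale r a) = r * \<omega> a"
    "\<exists>C. \<forall>a\<in>Asa c. \<bar>\<omega> a\<bar> \<le> C * cnorm h mu nu a"
    "\<omega> qI = 1" "fnorm c h mu nu \<omega> = 1"
  using assms unfolding states_def by blast+

lemma Asa_good: "a \<in> Asa c \<Longrightarrow> good a" using Sc_good(1) Asa_Sc by blast

lemma state_bound:
  assumes w: "\<omega> \<in> states c h mu nu" and a: "a \<in> Asa c"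
  shows "\<bar>\<omega> a\<bar> \<le> norm_ii1 a"
proof -
  obtain C where C: "\<forall>a\<in>Asa c. \<bar>\<omega> a\<bar> \<le> C * cnorm h mu nu a" using stateD(4)[OF w] by blast
  define Y where "Y = {\<bar>\<omega> a\<bar> | a. a \<in> Asa c \<and> cnorm h mu nu a \<le> 1}"
  have f1: "Sup Y = 1" using stateD(6)[OF w] unfolding fnorm_def Y_def .
  have bY: "bdd_above Y"
  proof -
    have "v \<le> \<bar>C\<bar>" if "v \<in> Y" for v
    proof -
      obtain b where v: "v = \<bar>\<omega> b\<bar>" and b: "b \<in> Asa c" "cnorm h mu nu b \<le> 1"
        using \<open>v \<in> Y\<close> unfolding Y_def by blast
      have "v \<le> C * cnorm h mu nu b" using C b v by blast
      also have "\<dots> \<le> \<bar>C\<bar> * cnorm h mu nu b" using cnorm_bounds(1)[OF Asa_good[OF b(1)]]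
        by (intro mult_right_mono) auto
      also have "\<dots> \<le> \<bar>C\<bar> * 1" using b(2) by (intro mult_left_mono) auto
      finally show ?thesis by simp
    qed
    then show ?thesis unfolding bdd_above_def by blast
  qed
  have le1: "\<bar>\<omega> b\<bar> \<le> 1" if "b \<in> Asa c" "cnorm h mu nu b \<le> 1" for b
  proof -
    have "\<bar>\<omega> b\<bar> \<in> Y" unfolding Y_def using that by blast
    then show ?thesis using cSup_upper[OF _ bY] f1 by fastforce
  qed
  define n where "n = norm_ii1 a"
  have n0: "0 \<le> n" unfolding n_def by (rule norm_ii1_nonneg[OF Asa_good[OF a]])
  show ?thesis
  proof (cases "n = 0")
    case True
    have "cnorm h mu nu a = 0" using cnorm_bounds[OF Asa_good[OF a], of h mu nu] True unfolding n_def by linarith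
    then show ?thesis using C a True unfolding n_def by fastforce
  next
    case False
    then have np: "0 < n" using n0 by simp
    have a': "qscale (1 / n) a \<in> Asa c" using Asa_scale[OF a] .
    have "norm_ii1 (qscale (1 / n) a) = 1"
      using norm_ii1_scale[OF Asa_good[OF a], of "1 / n"] np unfolding n_def by simp
    then have "cnorm h mu nu (qscale (1 / n) a) \<le> 1" using cnorm_bounds(2)[OF Asa_good[OF a']] by simp
    then have "\<bar>\<omega> (qscale (1 / n) a)\<bar> \<le> 1" using le1[OF a'] by blast
    then have "\<bar>\<omega> a\<bar> / n \<le> 1" using stateD(3)[OF w a, of "1 / n"] np by (simp add: abs_mult)
    then show ?thesis using np unfolding n_def by (simp add: field_simps)
  qed
qed



definition nrm :: "qhf \<Rightarrow> qhf" where
  "nrm a = qadd a (qscale (- Re (a 0 0 0)) qI)"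

lemma Asa_Im0: assumes "a \<in> Asa c" shows "Im (a x y 0) = 0"
proof -
  have st: "qstar a = a" using assms by (simp add: Asa_def)
  have "cnj (a x y 0) = a x y 0" using fun_cong[OF fun_cong[OF fun_cong[OF st, of x], of y], of 0]
    by (simp add: qstar_def)
  then have "Im (cnj (a x y 0)) = Im (a x y 0)" by simp
  then show ?thesis by simp
qed

lemma nrm_Asa: "a \<in> Asa c \<Longrightarrow> nrm a \<in> Asa c"
  unfolding nrm_def by (intro Asa_add Asa_scale qI_Asa)

lemma nrm_000: assumes "a \<in> Asa c" shows "nrm a 0 0 0 = 0"
proof -
  show ?thesis unfolding nrm_def qadd_def qscale_def qI_def using Asa_Im0[OF assms, of 0 0]
    by (simp add: complex_eq_iff)
qed

lemma nrm_delta: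
  assumes "a \<in> Asa c"
  shows "delta1 (nrm a) = delta1 a" "delta2 c (nrm a) = delta2 c a" "delta3 (nrm a) = delta3 a"
proof -
  have aS: "a \<in> Sc c" using assms by (simp add: Asa_def)
  have sS: "qscale (- Re (a 0 0 0)) qI \<in> Sc c" by (intro Sc_scale qI_Sc)
  show "delta1 (nrm a) = delta1 a" "delta2 c (nrm a) = delta2 c a" "delta3 (nrm a) = delta3 a"
    unfolding nrm_def delta_add[OF aS sS] delta_scale[OF qI_Sc] delta_qI
    by (auto simp: qadd_def qscale_def fun_eq_iff)
qed

lemma nrm_Lip: "a \<in> Asa c \<Longrightarrow> Lip c (nrm a) = Lip c a"
  unfolding Lip_def using nrm_delta by simp

lemma state_nrm:
  assumes w: "\<omega> \<in> states c h mu nu" and a: "a \<in> Asa c"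
  shows "\<omega> (nrm a) = \<omega> a - Re (a 0 0 0)"
  unfolding nrm_def using stateD(2)[OF w a Asa_scale[OF qI_Asa]] stateD(3)[OF w qI_Asa] stateD(5)[OF w]
  by simp

lemma state_diff:
  assumes w: "\<omega> \<in> states c h mu nu" and a: "a \<in> Asa c" and b: "b \<in> Asa c"
  shows "\<omega> (qadd a (qscale (-1) b)) = \<omega> a - \<omega> b"
  using stateD(2)[OF w a Asa_scale[OF b]] stateD(3)[OF w b] by simp

lemma nrm_bound:
  assumes b: "b \<in> Sc c" and b0: "b 0 0 0 = 0"
  shows "norm (b x y p) \<le> (real c + 2) * Lip c b"
proof -
  have L0: "0 \<le> Lip c b" by (rule Lip_nonneg[OF b])
  obtain x' y' where xy: "x' \<in> {0..1}" "y' \<in> {0..1}" and eq: "norm (b x y p) = norm (b x' y' p)"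
    using qp_reduce[OF qp_Sc[OF b]] by blast
  show ?thesis
  proof (cases "p = 0")
    case True
    have "norm (b x' y' 0 - b 0 0 0) \<le> Lip c b * \<bar>x' - 0\<bar> + (real c + 1) * Lip c b * \<bar>y' - 0\<bar>"
      by (rule Lip_square[OF b]) (use xy in auto)
    also have "\<dots> \<le> Lip c b * 1 + (real c + 1) * Lip c b * 1"
      using xy L0 by (intro add_mono mult_left_mono) auto
    finally show ?thesis using eq b0 True by (simp add: algebra_simps)
  next
    case False
    have "norm (delta3 b x y p) = 2 * pi * \<bar>real_of_int p\<bar> * norm (b x y p)"
      by (simp add: delta3_def norm_mult)
    moreover have "norm (delta3 b x y p) \<le> Lip c b" by (rule Lip_pt(3)[OF b])
    moreover have "1 \<le> 2 * pi * \<bar>real_of_int p\<bar>"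
    proof -
      have "1 \<le> \<bar>real_of_int p\<bar>" using False by linarith
      moreover have "1 \<le> 2 * pi" using pi_gt3 by linarith
      ultimately show ?thesis using mult_mono[of 1 "2 * pi" 1 "\<bar>real_of_int p\<bar>"] by simp
    qed
    ultimately have "norm (b x y p) \<le> Lip c b"
      using mult_right_mono[of 1 "2 * pi * \<bar>real_of_int p\<bar>" "norm (b x y p)"] by simp
    also have "\<dots> \<le> (real c + 2) * Lip c b" using L0 mult_right_mono[of 1 "real c + 2" "Lip c b"] by simp
    finally show ?thesis .
  qed
qed

lemma tail_bound:
  assumes b: "b \<in> Sc c" and p: "p \<noteq> 0"
  shows "norm (b x y p) \<le> sp (delta3 b) p / \<bar>real_of_int p\<bar>"
proof -
  have "norm (delta3 b x y p) = 2 * pi * \<bar>real_of_int p\<bar> * norm (b x y p)"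
    by (simp add: delta3_def norm_mult)
  moreover have "norm (delta3 b x y p) \<le> sp (delta3 b) p" by (rule good_sp(1)[OF Sc_good(4)[OF b]])
  moreover have "0 < \<bar>real_of_int p\<bar>" using p by simp
  moreover have "\<bar>real_of_int p\<bar> * norm (b x y p) \<le> 2 * pi * \<bar>real_of_int p\<bar> * norm (b x y p)"
  proof -
    have "1 \<le> 2 * pi" using pi_gt3 by linarith
    then have "1 * (\<bar>real_of_int p\<bar> * norm (b x y p)) \<le> (2 * pi) * (\<bar>real_of_int p\<bar> * norm (b x y p))"
      by (intro mult_right_mono) auto
    then show ?thesis by (simp add: mult.assoc)
  qed
  ultimately have "\<bar>real_of_int p\<bar> * norm (b x y p) \<le> sp (delta3 b) p" by linarith
  then show ?thesis using \<open>0 < \<bar>real_of_int p\<bar>\<close> by (simp add: field_simps)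
qed

lemma norm_ii1_nrm_bound:
  assumes b: "b \<in> Sc c" and b0: "b 0 0 0 = 0"
  shows "norm_ii1 b \<le> (real c + 3) * Lip c b"
proof -
  define K where "K = (real c + 2) * Lip c b"
  have pt: "sp b p \<le> (if p \<in> {0} then K else 0) + sp (delta3 b) p" for p
    unfolding sp_def[of b]
  proof (rule cSup_least)
    show "{norm (b x y p) |x y. True} \<noteq> {}" by blast
    fix v assume "v \<in> {norm (b x y p) |x y. True}"
    then obtain x y where v: "v = norm (b x y p)" by blast
    show "v \<le> (if p \<in> {0} then K else 0) + sp (delta3 b) p"
    proof (cases "p = 0")
      case True then show ?thesis using nrm_bound[OF b b0, of x y p] good_sp(2)[OF Sc_good(4)[OF b], of p] v
        unfolding K_def by simp
    next
      case False
      have "v \<le> sp (delta3 b) p / \<bar>real_of_int p\<bar>" using tail_bound[OF b False] v by simp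
      also have "\<dots> \<le> sp (delta3 b) p"
      proof -
        have p1: "1 \<le> \<bar>real_of_int p\<bar>" using False by linarith
        have s0: "0 \<le> sp (delta3 b) p" using good_sp(2)[OF Sc_good(4)[OF b], of p] .
        have "sp (delta3 b) p * 1 \<le> sp (delta3 b) p * \<bar>real_of_int p\<bar>" using p1 s0 by (rule mult_left_mono)
        then show ?thesis using p1 by (simp add: divide_le_eq)
      qed
      finally show ?thesis using False by simp
    qed
  qed
  have "norm_ii1 b \<le> infsum (\<lambda>p. (if p \<in> {0} then K else 0) + sp (delta3 b) p) UNIV"
    unfolding norm_ii1_sp
    by (rule infsum_mono[OF good_sp(3)[OF Sc_good(1)[OF b]] summable_on_add[OF fin_supp(1) good_sp(3)[OF Sc_good(4)[OF b]]] pt]) simp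
  also have "\<dots> = K + norm_ii1 (delta3 b)"
    unfolding norm_ii1_sp
    using fin_supp(2)[of "{0::int}" K] infsum_add[OF fin_supp(1)[of "{0::int}" K] good_sp(3)[OF Sc_good(4)[OF b]]]
    by simp
  also have "\<dots> \<le> K + Lip c b" using Lip_ge(3)[OF b] by simp
  finally show ?thesis unfolding K_def by (simp add: algebra_simps)
qed

lemma rho_fin:
  assumes w1: "\<omega>1 \<in> states c h mu nu" and w2: "\<omega>2 \<in> states c h mu nu"
  shows "rhoL c \<omega>1 \<omega>2 < \<infinity>"
proof -
  have "rhoL c \<omega>1 \<omega>2 \<le> ereal (2 * (real c + 3))"
    unfolding rhoL_def
  proof (rule SUP_least)
    fix a assume "a \<in> {a \<in> Asa c. Lip c a \<le> 1}"
    then have a: "a \<in> Asa c" and L: "Lip c a \<le> 1" by auto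
    have bA: "nrm a \<in> Asa c" by (rule nrm_Asa[OF a])
    have nb: "norm_ii1 (nrm a) \<le> real c + 3"
    proof -
      have "norm_ii1 (nrm a) \<le> (real c + 3) * Lip c (nrm a)"
        by (rule norm_ii1_nrm_bound[OF Asa_Sc[OF bA] nrm_000[OF a]])
      also have "\<dots> \<le> (real c + 3) * 1" using L nrm_Lip[OF a] by (intro mult_left_mono) auto
      finally show ?thesis by simp
    qed
    have "\<omega>1 a - \<omega>2 a = \<omega>1 (nrm a) - \<omega>2 (nrm a)"
      using state_nrm[OF w1 a] state_nrm[OF w2 a] by simp
    then have "\<bar>\<omega>1 a - \<omega>2 a\<bar> \<le> \<bar>\<omega>1 (nrm a)\<bar> + \<bar>\<omega>2 (nrm a)\<bar>" by simp
    also have "\<dots> \<le> 2 * (real c + 3)" using state_bound[OF w1 bA] state_bound[OF w2 bA] nb by simp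
    finally show "ereal \<bar>\<omega>1 a - \<omega>2 a\<bar> \<le> ereal (2 * (real c + 3))" by simp
  qed
  moreover have "ereal (2 * (real c + 3)) < \<infinity>" by simp
  ultimately show ?thesis by (rule order.strict_trans1)
qed

lemma lip_diff:
  assumes w0: "\<omega>0 \<in> states c h mu nu" and w: "\<omega> \<in> states c h mu nu" and a: "a \<in> Asa c"
    and r: "rhoL c \<omega>0 \<omega> < ereal e"
  shows "\<bar>\<omega>0 a - \<omega> a\<bar> \<le> Lip c a * e"
proof (cases "Lip c a = 0")
  case True
  then obtain r where ar: "a = qscale r qI" using Lip_zero_iff[OF a] by blast
  have "\<omega>0 a = r * \<omega>0 qI" unfolding ar by (rule stateD(3)[OF w0 qI_Asa])
  then have 1: "\<omega>0 a = r" using stateD(5)[OF w0] by simp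
  have "\<omega> a = r * \<omega> qI" unfolding ar by (rule stateD(3)[OF w qI_Asa])
  then have 2: "\<omega> a = r" using stateD(5)[OF w] by simp
  show ?thesis using True 1 2 by simp
next
  case False
  define L where "L = Lip c a"
  have Lp: "0 < L" using False Lip_nonneg[OF Asa_Sc[OF a]] unfolding L_def by simp
  have a': "qscale (1 / L) a \<in> Asa c" by (rule Asa_scale[OF a])
  have "Lip c (qscale (1 / L) a) = \<bar>1 / L\<bar> * L" unfolding L_def by (rule Lip_scale[OF Asa_Sc[OF a]])
  then have "Lip c (qscale (1 / L) a) = 1" using Lp by simp
  then have mem: "qscale (1 / L) a \<in> {a \<in> Asa c. Lip c a \<le> 1}" using a' by simp
  have "ereal \<bar>\<omega>0 (qscale (1 / L) a) - \<omega> (qscale (1 / L) a)\<bar> \<le> rhoL c \<omega>0 \<omega>"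
    unfolding rhoL_def by (rule SUP_upper[OF mem])
  then have "ereal \<bar>\<omega>0 (qscale (1 / L) a) - \<omega> (qscale (1 / L) a)\<bar> < ereal e"
    using r by (rule order.strict_trans1)
  then have lt: "\<bar>\<omega>0 (qscale (1 / L) a) - \<omega> (qscale (1 / L) a)\<bar> < e" by simp
  have "\<omega>0 (qscale (1 / L) a) - \<omega> (qscale (1 / L) a) = (\<omega>0 a - \<omega> a) / L"
    using stateD(3)[OF w0 a, of "1 / L"] stateD(3)[OF w a, of "1 / L"] by (simp add: diff_divide_distrib)
  then have "\<bar>\<omega>0 a - \<omega> a\<bar> / L < e" using lt Lp by simp
  then have "\<bar>\<omega>0 a - \<omega> a\<bar> < e * L" using Lp by (simp add: pos_divide_less_eq)
  then show ?thesis unfolding L_def by (simp add: mult.commute)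
qed



lemma grid_pt:
  fixes x :: real and G :: nat
  assumes x: "x \<in> {0..1}" and G: "1 \<le> G"
  shows "0 \<le> \<lfloor>x * real G\<rfloor>" "\<lfloor>x * real G\<rfloor> \<le> int G"
    "\<bar>x - real_of_int \<lfloor>x * real G\<rfloor> / real G\<bar> \<le> 1 / real G"
proof -
  have Gp: "0 < real G" using G by simp
  have x0: "0 \<le> x" and x1: "x \<le> 1" using x by auto
  have xg0: "0 \<le> x * real G" using x0 Gp by (intro mult_nonneg_nonneg) auto
  have "\<lfloor>0::real\<rfloor> \<le> \<lfloor>x * real G\<rfloor>" using xg0 by (rule floor_mono)
  then show "0 \<le> \<lfloor>x * real G\<rfloor>" by simp
  have "x * real G \<le> 1 * real G" using x1 Gp by (intro mult_right_mono) auto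
  then have "\<lfloor>x * real G\<rfloor> \<le> \<lfloor>real G\<rfloor>" by (intro floor_mono) simp
  then show "\<lfloor>x * real G\<rfloor> \<le> int G" by simp
  have f1: "real_of_int \<lfloor>x * real G\<rfloor> \<le> x * real G" by (rule of_int_floor_le)
  have f2: "x * real G < real_of_int \<lfloor>x * real G\<rfloor> + 1" by (rule real_of_int_floor_add_one_gt)
  define k where "k = real_of_int \<lfloor>x * real G\<rfloor>"
  have "k / real G \<le> x" using f1 Gp unfolding k_def by (simp only: divide_le_eq) simp
  moreover have "x - k / real G < 1 / real G"
  proof -
    have "x * real G - k < 1" using f2 unfolding k_def by linarith
    then have "(x * real G - k) / real G < 1 / real G" using Gp by (intro divide_strict_right_mono)
    moreover have "(x * real G - k) / real G = x - k / real G" using Gp by (simp add: diff_divide_distrib)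
    ultimately show ?thesis by simp
  qed
  ultimately show "\<bar>x - real_of_int \<lfloor>x * real G\<rfloor> / real G\<bar> \<le> 1 / real G" unfolding k_def by linarith
qed

lemma floor_eq_close:
  fixes u v \<eta> :: real
  assumes "0 < \<eta>" "\<lfloor>u / \<eta>\<rfloor> = \<lfloor>v / \<eta>\<rfloor>"
  shows "\<bar>u - v\<bar> < \<eta>"
proof -
  have e: "real_of_int \<lfloor>u / \<eta>\<rfloor> = real_of_int \<lfloor>v / \<eta>\<rfloor>" using assms(2) by simp
  have "\<bar>u / \<eta> - v / \<eta>\<bar> < 1"
    using e real_of_int_floor_add_one_gt[of "u / \<eta>"]
      real_of_int_floor_add_one_gt[of "v / \<eta>"] of_int_floor_le[of "u/\<eta>"] of_int_floor_le[of "v/\<eta>"]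
    by linarith
  moreover have "u / \<eta> - v / \<eta> = (u - v) / \<eta>" by (rule diff_divide_distrib[symmetric])
  ultimately have "\<bar>u - v\<bar> / \<eta> < 1" using assms(1) by (simp add: abs_divide)
  then show ?thesis using assms(1) by (simp only: divide_less_eq_1_pos)
qed

lemma floor_range:
  fixes u K \<eta> :: real
  assumes "0 < \<eta>" "\<bar>u\<bar> \<le> K"
  shows "\<lfloor>u / \<eta>\<rfloor> \<in> {- (\<lceil>K / \<eta>\<rceil> + 1) .. \<lceil>K / \<eta>\<rceil> + 1}"
proof -
  have "\<bar>u\<bar> / \<eta> \<le> K / \<eta>" using assms by (intro divide_right_mono) auto
  moreover have "\<bar>u / \<eta>\<bar> = \<bar>u\<bar> / \<eta>" using assms(1) by (simp add: abs_divide)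
  ultimately have a: "\<bar>u / \<eta>\<bar> \<le> K / \<eta>" by (simp only:)
  have b: "K / \<eta> \<le> real_of_int \<lceil>K / \<eta>\<rceil>" by (rule le_of_int_ceiling)
  have c: "real_of_int \<lfloor>u / \<eta>\<rfloor> \<le> u / \<eta>" by (rule of_int_floor_le)
  have d: "u / \<eta> < real_of_int \<lfloor>u / \<eta>\<rfloor> + 1" by (rule real_of_int_floor_add_one_gt)
  have e0: "\<And>t::real. - \<bar>t\<bar> \<le> t \<and> t \<le> \<bar>t\<bar>" by auto
  note e1 = e0[of "u / \<eta>"]
  have "real_of_int \<lfloor>u / \<eta>\<rfloor> \<le> real_of_int \<lceil>K / \<eta>\<rceil> + 1" using a b c e1 by linarith
  then have 1: "\<lfloor>u / \<eta>\<rfloor> \<le> \<lceil>K / \<eta>\<rceil> + 1" by linarith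
  have "- (real_of_int \<lceil>K / \<eta>\<rceil> + 1) \<le> real_of_int \<lfloor>u / \<eta>\<rfloor>" using a b d e1 by linarith
  then have 2: "- (\<lceil>K / \<eta>\<rceil> + 1) \<le> \<lfloor>u / \<eta>\<rfloor>" by linarith
  show ?thesis using 1 2 by simp
qed

lemma close_pair:
  assumes b: "b \<in> Sc c" and b': "b' \<in> Sc c" and Lb: "Lip c b \<le> 1" and Lb': "Lip c b' \<le> 1"
    and xy: "x \<in> {0..1}" "y \<in> {0..1}" and gs: "gx \<in> {0..1}" "gy \<in> {0..1}"
    and dx: "\<bar>x - gx\<bar> \<le> 1 / real G" and dy: "\<bar>y - gy\<bar> \<le> 1 / real G" and \<eta>: "0 < \<eta>"
    and fr: "\<lfloor>Re (b gx gy p) / \<eta>\<rfloor> = \<lfloor>Re (b' gx gy p) / \<eta>\<rfloor>"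
    and fi: "\<lfloor>Im (b gx gy p) / \<eta>\<rfloor> = \<lfloor>Im (b' gx gy p) / \<eta>\<rfloor>"
  shows "norm (b x y p - b' x y p) \<le> 2 * ((real c + 2) / real G) + 2 * \<eta>"
proof -
  have one: "norm (f x y p - f gx gy p) \<le> (real c + 2) / real G" if f: "f \<in> Sc c" "Lip c f \<le> 1" for f
  proof -
    have L0: "0 \<le> Lip c f" by (rule Lip_nonneg[OF f(1)])
    have "norm (f x y p - f gx gy p) \<le> Lip c f * \<bar>x - gx\<bar> + (real c + 1) * Lip c f * \<bar>y - gy\<bar>"
      by (rule Lip_square[OF f(1) xy(1) gs(1) xy(2) gs(2)])
    also have "\<dots> \<le> 1 * (1 / real G) + (real c + 1) * 1 * (1 / real G)"
      using L0 f(2) dx dy by (intro add_mono mult_mono) auto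
    finally show ?thesis by (simp add: add_divide_distrib[symmetric] algebra_simps)
  qed
  have mid: "norm (b gx gy p - b' gx gy p) \<le> 2 * \<eta>"
  proof -
    have "norm (b gx gy p - b' gx gy p) \<le> \<bar>Re (b gx gy p - b' gx gy p)\<bar> + \<bar>Im (b gx gy p - b' gx gy p)\<bar>"
      by (rule cmod_le)
    also have "\<dots> \<le> \<eta> + \<eta>" using floor_eq_close[OF \<eta> fr] floor_eq_close[OF \<eta> fi] by simp
    finally show ?thesis by simp
  qed
  define A where "A = b x y p - b gx gy p"
  define B where "B = b gx gy p - b' gx gy p"
  define C where "C = b' x y p - b' gx gy p"
  have e: "b x y p - b' x y p = (A + B) - C" unfolding A_def B_def C_def by simp
  have t1: "norm ((A + B) - C) \<le> norm (A + B) + norm C" by (rule norm_triangle_ineq4)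
  have t2: "norm (A + B) \<le> norm A + norm B" by (rule norm_triangle_ineq)
  have n: "norm (b x y p - b' x y p) = norm ((A + B) - C)" by (rule arg_cong[OF e])
  have "norm (b x y p - b' x y p) \<le> norm A + norm B + norm C"
    using n t1 t2 by linarith
  then have "norm (b x y p - b' x y p) \<le> norm (b x y p - b gx gy p) + norm (b gx gy p - b' gx gy p) + norm (b' x y p - b' gx gy p)"
    unfolding A_def B_def C_def .
  then show ?thesis using one[OF b Lb] one[OF b' Lb'] mid by linarith
qed


lemma close_norm:
  assumes b: "b \<in> Asa c" and b': "b' \<in> Asa c" and Lb: "Lip c b \<le> 1" and Lb': "Lip c b' \<le> 1"
    and N: "1 \<le> N" and G: "1 \<le> G" and \<eta>: "0 < \<eta>"
    and eq: "\<And>p i j. p \<in> {- int N..int N} \<Longrightarrow> i \<in> {0..int G} \<Longrightarrow> j \<in> {0..int G} \<Longrightarrow>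
       \<lfloor>Re (b (real_of_int i / real G) (real_of_int j / real G) p) / \<eta>\<rfloor> =
       \<lfloor>Re (b' (real_of_int i / real G) (real_of_int j / real G) p) / \<eta>\<rfloor> \<and>
       \<lfloor>Im (b (real_of_int i / real G) (real_of_int j / real G) p) / \<eta>\<rfloor> =
       \<lfloor>Im (b' (real_of_int i / real G) (real_of_int j / real G) p) / \<eta>\<rfloor>"
  shows "norm_ii1 (qadd b (qscale (-1) b')) \<le>
     (2 * ((real c + 2) / real G) + 2 * \<eta>) * (2 * real N + 1) + 2 / real N"
proof -
  have bS: "b \<in> Sc c" and b'S: "b' \<in> Sc c" using b b' by (auto simp: Asa_def)
  define d where "d = qadd b (qscale (-1) b')"
  have dS: "d \<in> Sc c" unfolding d_def by (intro Sc_add Sc_scale bS b'S)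
  have dv: "d x y p = b x y p - b' x y p" for x y p by (simp add: d_def qadd_def qscale_def)
  define e1 where "e1 = 2 * ((real c + 2) / real G) + 2 * \<eta>"
  have e10: "0 \<le> e1" unfolding e1_def using \<eta> by simp
  define W where "W = {- int N..int N}"
  define R where "R p = (if p \<in> W then e1 else 0) + (1 / real N) * (sp (delta3 b) p + sp (delta3 b') p)" for p
  have Np: "0 < real N" using N by simp
  have s3b: "0 \<le> sp (delta3 b) p" "0 \<le> sp (delta3 b') p" for p
    using good_sp(2)[OF Sc_good(4)[OF bS]] good_sp(2)[OF Sc_good(4)[OF b'S]] by auto
  have tail0: "0 \<le> (1 / real N) * (sp (delta3 b) p + sp (delta3 b') p)" for p
    using s3b[of p] Np by simp
  have spd: "sp d p \<le> R p" for p
    unfolding sp_def[of d]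
  proof (rule cSup_least)
    show "{norm (d x y p) |x y. True} \<noteq> {}" by blast
    fix v assume "v \<in> {norm (d x y p) |x y. True}"
    then obtain x0 y0 where v: "v = norm (d x0 y0 p)" by blast
    obtain x y where xy: "x \<in> {0..1}" "y \<in> {0..1}" and nx: "norm (d x0 y0 p) = norm (d x y p)"
      using qp_reduce[OF qp_Sc[OF dS]] by blast
    show "v \<le> R p"
    proof (cases "p \<in> W")
      case True
      define i where "i = \<lfloor>x * real G\<rfloor>"
      define j where "j = \<lfloor>y * real G\<rfloor>"
      have i: "i \<in> {0..int G}" "\<bar>x - real_of_int i / real G\<bar> \<le> 1 / real G"
        using grid_pt[OF xy(1) G] unfolding i_def by auto
      have j: "j \<in> {0..int G}" "\<bar>y - real_of_int j / real G\<bar> \<le> 1 / real G"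
        using grid_pt[OF xy(2) G] unfolding j_def by auto
      have Gp: "0 < real G" using G by simp
      have gi: "real_of_int i / real G \<in> {0..1}" using i(1) Gp by (auto simp: divide_le_eq)
      have gj: "real_of_int j / real G \<in> {0..1}" using j(1) Gp by (auto simp: divide_le_eq)
      have E: "\<lfloor>Re (b (real_of_int i / real G) (real_of_int j / real G) p) / \<eta>\<rfloor> =
       \<lfloor>Re (b' (real_of_int i / real G) (real_of_int j / real G) p) / \<eta>\<rfloor> \<and>
       \<lfloor>Im (b (real_of_int i / real G) (real_of_int j / real G) p) / \<eta>\<rfloor> =
       \<lfloor>Im (b' (real_of_int i / real G) (real_of_int j / real G) p) / \<eta>\<rfloor>"
        using eq[of p i j] True i(1) j(1) unfolding W_def by blast
      have "norm (b x y p - b' x y p) \<le> e1" unfolding e1_def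
        by (rule close_pair[OF bS b'S Lb Lb' xy gi gj i(2) j(2) \<eta>]) (use E in auto)
      moreover have "v = norm (d x y p)" using v nx by simp
      ultimately show ?thesis unfolding dv R_def using True tail0[of p] by simp
    next
      case False
      then have pN: "real N \<le> \<bar>real_of_int p\<bar>" unfolding W_def by auto
      then have p0: "p \<noteq> 0" using N by auto
      have "norm (d x y p) \<le> norm (b x y p) + norm (b' x y p)" unfolding dv by (rule norm_triangle_ineq4)
      also have "\<dots> \<le> sp (delta3 b) p / \<bar>real_of_int p\<bar> + sp (delta3 b') p / \<bar>real_of_int p\<bar>"
        using tail_bound[OF bS p0] tail_bound[OF b'S p0] by (intro add_mono) auto
      also have "\<dots> \<le> sp (delta3 b) p / real N + sp (delta3 b') p / real N"
        using s3b[of p] pN Np by (intro add_mono divide_left_mono) auto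
      also have "\<dots> = (1 / real N) * (sp (delta3 b) p + sp (delta3 b') p)" by (simp add: add_divide_distrib)
      finally show ?thesis unfolding v nx R_def using False by simp
    qed
  qed
  have fW: "finite W" unfolding W_def by simp
  have cW: "real (card W) = 2 * real N + 1" unfolding W_def by simp
  have sA: "(\<lambda>p. if p \<in> W then e1 else 0) summable_on UNIV" by (rule fin_supp(1)[OF fW])
  have sB: "(\<lambda>p. sp (delta3 b) p + sp (delta3 b') p) summable_on UNIV"
    by (rule summable_on_add[OF good_sp(3)[OF Sc_good(4)[OF bS]] good_sp(3)[OF Sc_good(4)[OF b'S]]])
  have sB': "(\<lambda>p. (1 / real N) * (sp (delta3 b) p + sp (delta3 b') p)) summable_on UNIV"
    by (rule summable_on_cmult_right[OF sB])
  have sR: "R summable_on UNIV" unfolding R_def by (rule summable_on_add[OF sA sB'])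
  have "norm_ii1 d \<le> infsum R UNIV"
    unfolding norm_ii1_sp by (rule infsum_mono[OF good_sp(3)[OF Sc_good(1)[OF dS]] sR spd])
  also have "infsum R UNIV = e1 * (2 * real N + 1) + (1 / real N) * (norm_ii1 (delta3 b) + norm_ii1 (delta3 b'))"
  proof -
    have "infsum R UNIV = infsum (\<lambda>p. if p \<in> W then e1 else 0) UNIV +
        infsum (\<lambda>p. (1 / real N) * (sp (delta3 b) p + sp (delta3 b') p)) UNIV"
      unfolding R_def by (rule infsum_add[OF sA sB'])
    also have "infsum (\<lambda>p. (1 / real N) * (sp (delta3 b) p + sp (delta3 b') p)) UNIV =
        (1 / real N) * infsum (\<lambda>p. sp (delta3 b) p + sp (delta3 b') p) UNIV"
      by (rule infsum_cmult_right) (use sB in auto)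
    also have "infsum (\<lambda>p. sp (delta3 b) p + sp (delta3 b') p) UNIV = norm_ii1 (delta3 b) + norm_ii1 (delta3 b')"
      unfolding norm_ii1_sp
      by (rule infsum_add[OF good_sp(3)[OF Sc_good(4)[OF bS]] good_sp(3)[OF Sc_good(4)[OF b'S]]])
    finally show ?thesis using fin_supp(2)[OF fW, of e1] cW by simp
  qed
  also have "\<dots> \<le> e1 * (2 * real N + 1) + (1 / real N) * 2"
  proof -
    have "norm_ii1 (delta3 b) + norm_ii1 (delta3 b') \<le> 2"
      using Lip_ge(3)[OF bS] Lip_ge(3)[OF b'S] Lb Lb' by linarith
    then show ?thesis using Np by (intro add_left_mono mult_left_mono) auto
  qed
  finally show ?thesis unfolding d_def e1_def by simp
qed


lemma net:
  assumes e: "0 < e"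
  shows "\<exists>F. finite F \<and> F \<subseteq> Asa c \<and> (\<forall>\<omega>0\<in>states c h mu nu. \<forall>\<omega>\<in>states c h mu nu.
            (\<forall>a\<in>F. \<bar>\<omega> a - \<omega>0 a\<bar> < e / 4) \<longrightarrow> rhoL c \<omega>0 \<omega> \<le> ereal (e / 2))"
proof -
  define N :: nat where "N = nat \<lceil>32 / e\<rceil> + 1"
  have N1: "1 \<le> N" unfolding N_def by simp
  have Np: "0 < real N" using N1 by simp
  have "32 / e \<le> real (nat \<lceil>32 / e\<rceil>)" by linarith
  then have N32: "32 / e \<le> real N" unfolding N_def by simp
  then have "32 \<le> e * real N" using e by (simp add: divide_le_eq mult.commute)
  then have Nb: "2 / real N \<le> e / 16" using Np e by (simp add: divide_le_eq field_simps)
  define \<epsilon>1 where "\<epsilon>1 = e / (16 * (2 * real N + 1))"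
  have \<epsilon>1p: "0 < \<epsilon>1" unfolding \<epsilon>1_def using e Np by simp
  define \<eta> where "\<eta> = \<epsilon>1 / 4"
  have \<eta>p: "0 < \<eta>" unfolding \<eta>_def using \<epsilon>1p by simp
  define G :: nat where "G = nat \<lceil>4 * (real c + 2) / \<epsilon>1\<rceil> + 1"
  have G1: "1 \<le> G" unfolding G_def by simp
  have Gp: "0 < real G" using G1 by simp
  have "4 * (real c + 2) / \<epsilon>1 \<le> real (nat \<lceil>4 * (real c + 2) / \<epsilon>1\<rceil>)" by linarith
  then have "4 * (real c + 2) / \<epsilon>1 \<le> real G" unfolding G_def by simp
  then have "4 * (real c + 2) \<le> \<epsilon>1 * real G" using \<epsilon>1p by (simp add: divide_le_eq mult.commute)
  then have Gb: "(real c + 2) / real G \<le> \<epsilon>1 / 4" using Gp \<epsilon>1p by (simp add: divide_le_eq field_simps)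
  have tot: "(2 * ((real c + 2) / real G) + 2 * \<eta>) * (2 * real N + 1) + 2 / real N \<le> e / 8"
  proof -
    have "2 * ((real c + 2) / real G) + 2 * \<eta> \<le> \<epsilon>1" using Gb unfolding \<eta>_def by linarith
    then have "(2 * ((real c + 2) / real G) + 2 * \<eta>) * (2 * real N + 1) \<le> \<epsilon>1 * (2 * real N + 1)"
      using Np by (intro mult_right_mono) auto
    also have "\<epsilon>1 * (2 * real N + 1) = e / 16" unfolding \<epsilon>1_def using Np by (simp add: field_simps)
    finally show ?thesis using Nb by linarith
  qed
  define Gr where "Gr = {- int N..int N} \<times> {0..int G} \<times> {0..int G}"
  define Z where "Z = \<lceil>(real c + 2) / \<eta>\<rceil> + 1"
  define RR where "RR = {- Z..Z}"
  define kap where "kap b = restrict (\<lambda>(p, i, j). (\<lfloor>Re (b (real_of_int i / real G) (real_of_int j / real G) p) / \<eta>\<rfloor>,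
      \<lfloor>Im (b (real_of_int i / real G) (real_of_int j / real G) p) / \<eta>\<rfloor>)) Gr" for b :: qhf
  define B' where "B' = {b \<in> Asa c. Lip c b \<le> 1 \<and> b 0 0 0 = 0}"
  have kapR: "kap ` B' \<subseteq> PiE Gr (\<lambda>_. RR \<times> RR)"
  proof
    fix k assume "k \<in> kap ` B'"
    then obtain b where b: "b \<in> B'" and k: "k = kap b" by blast
    have bS: "b \<in> Sc c" and Lb: "Lip c b \<le> 1" and b0: "b 0 0 0 = 0" using b unfolding B'_def Asa_def by auto
    have nb: "norm (b x y p) \<le> real c + 2" for x y p
    proof -
      have "norm (b x y p) \<le> (real c + 2) * Lip c b" by (rule nrm_bound[OF bS b0])
      also have "\<dots> \<le> (real c + 2) * 1" using Lb by (intro mult_left_mono) auto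
      finally show ?thesis by simp
    qed
    have "\<lfloor>Re (b x y p) / \<eta>\<rfloor> \<in> RR" "\<lfloor>Im (b x y p) / \<eta>\<rfloor> \<in> RR" for x y p
      unfolding RR_def Z_def
      using floor_range[OF \<eta>p order_trans[OF abs_Re_le_cmod nb]] floor_range[OF \<eta>p order_trans[OF abs_Im_le_cmod nb]]
      by auto
    then show "k \<in> PiE Gr (\<lambda>_. RR \<times> RR)" unfolding k kap_def by auto
  qed
  have finK: "finite (kap ` B')"
    by (rule finite_subset[OF kapR finite_PiE]) (auto simp: Gr_def RR_def)
  define rep where "rep k = (SOME b. b \<in> B' \<and> kap b = k)" for k
  have rep_ok: "rep (kap b) \<in> B' \<and> kap (rep (kap b)) = kap b" if "b \<in> B'" for b
  proof -
    have "\<exists>b'. b' \<in> B' \<and> kap b' = kap b" using that by blast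
    then show ?thesis unfolding rep_def by (rule someI_ex)
  qed
  define F where "F = rep ` kap ` B'"
  have finF: "finite F" unfolding F_def using finK by simp
  have FB: "F \<subseteq> B'" unfolding F_def using rep_ok by blast
  have FA: "F \<subseteq> Asa c" using FB unfolding B'_def by blast
  have close: "norm_ii1 (qadd b (qscale (-1) b')) \<le> e / 8" if b: "b \<in> B'" and b': "b' \<in> B'" and kk: "kap b = kap b'" for b b'
  proof -
    have "norm_ii1 (qadd b (qscale (-1) b')) \<le> (2 * ((real c + 2) / real G) + 2 * \<eta>) * (2 * real N + 1) + 2 / real N"
    proof (rule close_norm)
      show "b \<in> Asa c" "b' \<in> Asa c" "Lip c b \<le> 1" "Lip c b' \<le> 1" using b b' unfolding B'_def by auto
      show "1 \<le> N" "1 \<le> G" "0 < \<eta>" by (fact N1 G1 \<eta>p)+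
      fix p i j assume pij: "p \<in> {- int N..int N}" "i \<in> {0..int G}" "j \<in> {0..int G}"
      then have "(p, i, j) \<in> Gr" unfolding Gr_def by simp
      then have "kap b (p, i, j) = kap b' (p, i, j)" using kk by simp
      with \<open>(p, i, j) \<in> Gr\<close> show "\<lfloor>Re (b (real_of_int i / real G) (real_of_int j / real G) p) / \<eta>\<rfloor> =
       \<lfloor>Re (b' (real_of_int i / real G) (real_of_int j / real G) p) / \<eta>\<rfloor> \<and>
       \<lfloor>Im (b (real_of_int i / real G) (real_of_int j / real G) p) / \<eta>\<rfloor> =
       \<lfloor>Im (b' (real_of_int i / real G) (real_of_int j / real G) p) / \<eta>\<rfloor>"
        unfolding kap_def by simp
    qed
    then show ?thesis using tot by linarith
  qed
  show ?thesis
  proof (intro exI conjI ballI impI)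
    show "finite F" "F \<subseteq> Asa c" by (fact finF FA)+
    fix \<omega>0 \<omega> assume w0: "\<omega>0 \<in> states c h mu nu" and w: "\<omega> \<in> states c h mu nu"
      and hyp: "\<forall>a\<in>F. \<bar>\<omega> a - \<omega>0 a\<bar> < e / 4"
    show "rhoL c \<omega>0 \<omega> \<le> ereal (e / 2)"
      unfolding rhoL_def
    proof (rule SUP_least)
      fix a assume "a \<in> {a \<in> Asa c. Lip c a \<le> 1}"
      then have a: "a \<in> Asa c" and La: "Lip c a \<le> 1" by auto
      define b where "b = nrm a"
      have bB: "b \<in> B'" unfolding b_def B'_def using nrm_Asa[OF a] nrm_Lip[OF a] La nrm_000[OF a] by simp
      define b' where "b' = rep (kap b)"
      have b'B: "b' \<in> B'" and kk: "kap b' = kap b" unfolding b'_def using rep_ok[OF bB] by auto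
      have b'F: "b' \<in> F" unfolding b'_def F_def using bB by blast
      have bA: "b \<in> Asa c" and b'A: "b' \<in> Asa c" using bB b'B unfolding B'_def by auto
      define d where "d = qadd b (qscale (-1) b')"
      have dA: "d \<in> Asa c" unfolding d_def by (intro Asa_add Asa_scale bA b'A)
      have nd: "norm_ii1 d \<le> e / 8" unfolding d_def by (rule close[OF bB b'B kk[symmetric]])
      have "\<omega>0 a - \<omega> a = \<omega>0 b - \<omega> b" unfolding b_def using state_nrm[OF w0 a] state_nrm[OF w a] by simp
      also have "\<dots> = \<omega>0 d - \<omega> d + (\<omega>0 b' - \<omega> b')"
        unfolding d_def using state_diff[OF w0 bA b'A] state_diff[OF w bA b'A] by simp
      finally have eq: "\<omega>0 a - \<omega> a = \<omega>0 d - \<omega> d + (\<omega>0 b' - \<omega> b')" .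
      have "\<bar>\<omega>0 d\<bar> \<le> e / 8" using state_bound[OF w0 dA] nd by linarith
      moreover have "\<bar>\<omega> d\<bar> \<le> e / 8" using state_bound[OF w dA] nd by linarith
      moreover have "\<bar>\<omega> b' - \<omega>0 b'\<bar> < e / 4" using hyp b'F by blast
      ultimately have "\<bar>\<omega>0 a - \<omega> a\<bar> \<le> e / 2" unfolding eq by linarith
      then show "ereal \<bar>\<omega>0 a - \<omega> a\<bar> \<le> ereal (e / 2)" by simp
    qed
  qed
qed


lemma istop_dist:
  "istopology (\<lambda>U. U \<subseteq> S \<and> (\<forall>x\<in>U. \<exists>e>0. \<forall>y\<in>S. d x y < ereal e \<longrightarrow> y \<in> U))"
  unfolding istopology_def
proof (rule conjI; intro allI impI)
  fix U V assume U: "U \<subseteq> S \<and> (\<forall>x\<in>U. \<exists>e>0. \<forall>y\<in>S. d x y < ereal e \<longrightarrow> y \<in> U)"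
    and V: "V \<subseteq> S \<and> (\<forall>x\<in>V. \<exists>e>0. \<forall>y\<in>S. d x y < ereal e \<longrightarrow> y \<in> V)"
  show "U \<inter> V \<subseteq> S \<and> (\<forall>x\<in>U \<inter> V. \<exists>e>0. \<forall>y\<in>S. d x y < ereal e \<longrightarrow> y \<in> U \<inter> V)"
  proof (intro conjI ballI)
    show "U \<inter> V \<subseteq> S" using U by blast
    fix x assume x: "x \<in> U \<inter> V"
    obtain e1 where e1: "e1 > 0" "\<forall>y\<in>S. d x y < ereal e1 \<longrightarrow> y \<in> U" using U x by blast
    obtain e2 where e2: "e2 > 0" "\<forall>y\<in>S. d x y < ereal e2 \<longrightarrow> y \<in> V" using V x by blast
    show "\<exists>e>0. \<forall>y\<in>S. d x y < ereal e \<longrightarrow> y \<in> U \<inter> V"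
    proof (intro exI conjI ballI impI)
      show "0 < min e1 e2" using e1 e2 by simp
      fix y assume y: "y \<in> S" "d x y < ereal (min e1 e2)"
      have "d x y < ereal e1" "d x y < ereal e2" using y(2) by (auto intro: order.strict_trans2)
      then show "y \<in> U \<inter> V" using e1 e2 y(1) by blast
    qed
  qed
next
  fix K assume K: "\<forall>U\<in>K. U \<subseteq> S \<and> (\<forall>x\<in>U. \<exists>e>0. \<forall>y\<in>S. d x y < ereal e \<longrightarrow> y \<in> U)"
  show "\<Union>K \<subseteq> S \<and> (\<forall>x\<in>\<Union>K. \<exists>e>0. \<forall>y\<in>S. d x y < ereal e \<longrightarrow> y \<in> \<Union>K)"
  proof (intro conjI ballI)
    show "\<Union>K \<subseteq> S" using K by blast
    fix x assume "x \<in> \<Union>K"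
    then obtain U where U: "U \<in> K" "x \<in> U" by blast
    then obtain e where "e > 0" "\<forall>y\<in>S. d x y < ereal e \<longrightarrow> y \<in> U" using K by blast
    then show "\<exists>e>0. \<forall>y\<in>S. d x y < ereal e \<longrightarrow> y \<in> \<Union>K" using U by blast
  qed
qed

lemma openin_dist:
  "openin (dist_topology S d) U \<longleftrightarrow> U \<subseteq> S \<and> (\<forall>x\<in>U. \<exists>e>0. \<forall>y\<in>S. d x y < ereal e \<longrightarrow> y \<in> U)"
  unfolding dist_topology_def topology_inverse'[OF istop_dist] ..

lemma states_ext: "states c h mu nu \<subseteq> topspace (product_topology (\<lambda>_. euclideanreal) (Asa c))"
  using stateD(1) by (auto simp: PiE_def)

lemma topo_eq:
  "dist_topology (states c h mu nu) (rhoL c) = weak_star_topology c (states c h mu nu)"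
proof -
  let ?S = "states c h mu nu"
  let ?P = "product_topology (\<lambda>_. euclideanreal) (Asa c)"
  show ?thesis unfolding topology_eq
  proof (intro allI iffI)
    fix U assume "openin (dist_topology ?S (rhoL c)) U"
    then have US: "U \<subseteq> ?S" and Uo: "\<forall>x\<in>U. \<exists>e>0. \<forall>y\<in>?S. rhoL c x y < ereal e \<longrightarrow> y \<in> U"
      unfolding openin_dist by auto
    show "openin (weak_star_topology c ?S) U"
      unfolding openin_subopen[of _ U]
    proof
      fix w0 assume w0U: "w0 \<in> U"
      then have w0: "w0 \<in> ?S" using US by blast
      obtain e where e: "e > 0" and eU: "\<forall>y\<in>?S. rhoL c w0 y < ereal e \<longrightarrow> y \<in> U" using Uo w0U by blast
      obtain F where F: "finite F" "F \<subseteq> Asa c" and Fn: "\<forall>\<omega>0\<in>?S. \<forall>\<omega>\<in>?S.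
            (\<forall>a\<in>F. \<bar>\<omega> a - \<omega>0 a\<bar> < e / 4) \<longrightarrow> rhoL c \<omega>0 \<omega> \<le> ereal (e / 2)"
        using net[OF e, of c h mu nu] by blast
      define X where "X a = (if a \<in> F then ball (w0 a) (e / 4) else UNIV)" for a
      define T where "T = PiE (Asa c) X \<inter> ?S"
      have Xo: "openin euclideanreal (X a)" for a unfolding X_def by auto
      have Xf: "finite {a. X a \<noteq> topspace euclideanreal}"
        by (rule finite_subset[OF _ F(1)]) (auto simp: X_def)
      have "openin ?P (PiE (Asa c) X)" by (rule product_topology_basis[OF Xo Xf])
      then have To: "openin (weak_star_topology c ?S) T"
        unfolding weak_star_topology_def openin_subtopology T_def by blast
      have w0T: "w0 \<in> T"
        unfolding T_def using w0 stateD(1)[OF w0] e by (auto simp: PiE_def X_def)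
      have TU: "T \<subseteq> U"
      proof
        fix w assume "w \<in> T"
        then have w: "w \<in> ?S" and wX: "\<forall>a\<in>Asa c. w a \<in> X a" unfolding T_def by (auto simp: PiE_def)
        have "\<forall>a\<in>F. \<bar>w a - w0 a\<bar> < e / 4"
        proof
          fix a assume aF: "a \<in> F"
          then have "a \<in> Asa c" using F(2) by blast
          then have "w a \<in> X a" using wX by blast
          then have "w a \<in> ball (w0 a) (e / 4)" using aF unfolding X_def by simp
          then show "\<bar>w a - w0 a\<bar> < e / 4" by (simp add: dist_real_def abs_minus_commute)
        qed
        then have "rhoL c w0 w \<le> ereal (e / 2)" using Fn w0 w by blast
        also have "\<dots> < ereal e" using e by simp
        finally show "w \<in> U" using eU w by blast
      qed
      show "\<exists>T. openin (weak_star_topology c ?S) T \<and> w0 \<in> T \<and> T \<subseteq> U" using To w0T TU by blast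
    qed
  next
    fix U assume "openin (weak_star_topology c ?S) U"
    then obtain Ob where Oo: "openin ?P Ob" and UO: "U = Ob \<inter> ?S"
      unfolding weak_star_topology_def openin_subtopology by blast
    show "openin (dist_topology ?S (rhoL c)) U"
      unfolding openin_dist
    proof (intro conjI ballI)
      show "U \<subseteq> ?S" using UO by blast
      fix w0 assume w0U: "w0 \<in> U"
      then have w0: "w0 \<in> ?S" and w0O: "w0 \<in> Ob" using UO by auto
      obtain V where Vf: "finite {i \<in> Asa c. V i \<noteq> topspace euclideanreal}"
        and Vo: "\<forall>i\<in>Asa c. openin euclideanreal (V i)" and w0V: "w0 \<in> PiE (Asa c) V" and VO: "PiE (Asa c) V \<subseteq> Ob"
        using Oo w0O unfolding openin_product_topology_alt by blast
      define J where "J = {i \<in> Asa c. V i \<noteq> topspace euclideanreal}"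
      have fJ: "finite J" using Vf unfolding J_def .
      have JA: "J \<subseteq> Asa c" unfolding J_def by blast
      have "\<forall>i\<in>J. \<exists>r>0. ball (w0 i) r \<subseteq> V i"
      proof
        fix i assume i: "i \<in> J"
        then have "open (V i)" "w0 i \<in> V i" using Vo w0V JA by (auto simp: PiE_def)
        then show "\<exists>r>0. ball (w0 i) r \<subseteq> V i" by (simp add: open_contains_ball)
      qed
      from bchoice[OF this] obtain r where r: "\<forall>i\<in>J. r i > 0 \<and> ball (w0 i) (r i) \<subseteq> V i" by blast
      define e where "e = Min (insert 1 ((\<lambda>i. r i / (Lip c i + 1)) ` J))"
      have e_pos: "e > 0" unfolding e_def using fJ r JA Lip_nonneg Asa_Sc
        by (subst Min_gr_iff) (auto intro!: divide_pos_pos add_nonneg_pos)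
      have e_le: "e \<le> r i / (Lip c i + 1)" if "i \<in> J" for i
        unfolding e_def using fJ that by (intro Min_le) auto
      show "\<exists>e>0. \<forall>y\<in>?S. rhoL c w0 y < ereal e \<longrightarrow> y \<in> U"
      proof (intro exI conjI ballI impI)
        show "0 < e" by (rule e_pos)
        fix w assume w: "w \<in> ?S" and rw: "rhoL c w0 w < ereal e"
        have "w \<in> PiE (Asa c) V"
        proof -
          have "w i \<in> V i" if i: "i \<in> Asa c" for i
          proof (cases "i \<in> J")
            case True
            have L0: "0 \<le> Lip c i" by (rule Lip_nonneg[OF Asa_Sc[OF i]])
            have "\<bar>w0 i - w i\<bar> \<le> Lip c i * e" by (rule lip_diff[OF w0 w i rw])
            also have "\<dots> \<le> Lip c i * (r i / (Lip c i + 1))" using e_le[OF True] L0 by (intro mult_left_mono) auto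
            also have "\<dots> < r i"
            proof -
              have rp: "r i > 0" using r True by blast
              have "Lip c i * (r i / (Lip c i + 1)) = r i * (Lip c i / (Lip c i + 1))" by simp
              also have "\<dots> < r i * 1" using rp L0 by (intro mult_strict_left_mono) auto
              finally show ?thesis by simp
            qed
            finally have "w i \<in> ball (w0 i) (r i)" by (simp add: dist_real_def)
            then show ?thesis using r True by blast
          next
            case False
            then show ?thesis using i unfolding J_def by simp
          qed
          then show ?thesis using stateD(1)[OF w] by (auto simp: PiE_def)
        qed
        then show "w \<in> U" using VO UO w by blast
      qed
    qed
  qed
qed



theorem mainTheorem5:
  fixes c :: nat and h mu nu :: real
  assumes "c > 0" and "mu\<^sup>2 + nu\<^sup>2 \<noteq> 0"
  shows "(\<forall>a\<in>Asa c. \<forall>b\<in>Asa c. Lip c (qadd a b) \<le> Lip c a + Lip c b)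
       \<and> (\<forall>r. \<forall>a\<in>Asa c. Lip c (qscale r a) = \<bar>r\<bar> * Lip c a)
       \<and> (\<forall>a\<in>Asa c. Lip c a = 0 \<longleftrightarrow> (\<exists>r. a = qscale r qI))
       \<and> (\<forall>\<omega>1\<in>states c h mu nu. \<forall>\<omega>2\<in>states c h mu nu. rhoL c \<omega>1 \<omega>2 < \<infinity>)
       \<and> dist_topology (states c h mu nu) (rhoL c) = weak_star_topology c (states c h mu nu)"
proof (intro conjI ballI allI)
  fix a b assume a: "a \<in> Asa c" and b: "b \<in> Asa c"
  show "Lip c (qadd a b) \<le> Lip c a + Lip c b" by (rule Lip_add[OF Asa_Sc[OF a] Asa_Sc[OF b]])
next
  fix r a assume a: "a \<in> Asa c"
  show "Lip c (qscale r a) = \<bar>r\<bar> * Lip c a" by (rule Lip_scale[OF Asa_Sc[OF a]])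
next
  fix a assume a: "a \<in> Asa c"
  show "Lip c a = 0 \<longleftrightarrow> (\<exists>r. a = qscale r qI)" by (rule Lip_zero_iff[OF a])
next
  fix \<omega>1 \<omega>2 assume "\<omega>1 \<in> states c h mu nu" "\<omega>2 \<in> states c h mu nu"
  then show "rhoL c \<omega>1 \<omega>2 < \<infinity>" by (rule rho_fin)
next
  show "dist_topology (states c h mu nu) (rhoL c) = weak_star_topology c (states c h mu nu)"
    by (rule topo_eq)
qed

end
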